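(* For every $\tau\in(0,1)$, the discrete Aubry set $\widetilde{\mathcal A}^{\tau}_L$ and the discrete Mather set $\widetilde{\mathcal M}^{\tau}_L$ are nonempty and compact, and $\widetilde{\mathcal M}^{\tau}_L\subset\widetilde{\mathcal A}^{\tau}_L$.
   Context: $\mathbb{T}^d=\mathbb{R}^d/\mathbb{Z}^d$; functions on $\mathbb{T}^d$ are identified with $\mathbb{Z}^d$-periodic functions on $\mathbb{R}^d$. $H$ is a Tonelli Hamiltonian on $\mathbb{T}^d\times\mathbb{R}^d$ ($C^2$, $D^2_{pp}H>0$, superlinear in $p$ uniformly in $x$) and $L(x,v)=\sup_p\{p\cdot v-H(x,p)\}$ its Legendre transform. For $\tau>0$, $\mathcal L_\tau(x,y):=\tau L(x,\frac{y-x}{\tau})$. The discrete Lax--Oleinik equation is $u_\tau(y)+\bar L(\tau)\tau=\inf_{x\in\mathbb{R}^d}(u_\tau(x)+\mathcal L_\tau(x,y))$; there is a unique constant $\bar L(\tau)$ for which a continuous periodic solution exists; fix such a solution $u_\tau$. A calibrated configuration for $u_\tau(x)$ is a sequence $\{x_{-k}\}_{k\ge0}$ with $x_0=x$ and $u_\tau(x_{-k})+\tau\bar L(\tau)=u_\tau(x_{-k-1})+\mathcal L_\tau(x_{-k-1},x_{-k})$ for all $k\ge0$. Discrete Aubry set: $\widetilde\Sigma^\tau_L:=\{(x,v):$ there is a calibrated configuration for $u_\tau(x+\tau v)$ with $x_{-1}=x$, $(x_0-x_{-1})/\tau=v\}$; $\Psi^n_{L,\tau}(x,v)$ is the set of points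 $(x_{-n-1},\frac{x_{-n}-x_{-n-1}}{\tau})$ over all such calibrated configurations for $u_\tau(x+\tau v)$ with $x_{-1}=x$, $v=(x_0-x_{-1})/\tau$ (extended to sets by union); $\widetilde{\mathcal A}^\tau_L:=\bigcap_{n\in\mathbb{N}}\Psi^n_{L,\tau}(\widetilde\Sigma^\tau_L)\subset\mathbb{T}^d\times\mathbb{R}^d$. Discrete Mather set: a probability measure $\mu_\tau$ on $\mathbb{T}^d\times\mathbb{T}^d$ is discrete holonomic if $\int(\varphi(y)-\varphi(x))\,d\mu_\tau(x,y)=0$ for all $\varphi\in C(\mathbb{T}^d)$; let $\mathcal H_\tau$ be the set of such measures. Equivalently, via $\Theta_\tau(x,v)=(x,x+\tau v)$, these are push-forwards $(\Theta_\tau)_\sharp\tilde\mu_\tau$ of probability measures $\tilde\mu_\tau$ on $\mathbb{T}^d\times\mathbb{R}^d$ with $\int(\varphi(x+\tau v)-\varphi(x))\,d\tilde\mu_\tau=0$, and $\int\mathcal L_\tau\,d\mu_\tau=\tau\int L\,d\tilde\mu_\tau$. A discrete Mather measure is a $\mu_\tau\in\mathcal H_\tau$ minimizing $\mathfrak A_\tau(\mu_\tau)=\int\mathcal L_\tau\,d\mu_\tau$ over $\mathcal H_\tau$. The discrete Mather set $\widetilde{\mathcal M}^\tau_L$ is the closure of the union of the supports of all discrete Mather measures, identified with a subset of $\mathbb{T}^d\times\mathbb{R}^d$ via $(x,y)\mapsto(x,(y-x)/\tau)$. *)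

theory Defs
  imports "HOL-Probability.Probability"
begin

text \<open>Points of the torus are represented by their lifts in real^'n; a function on the torus
  is a Z^d-periodic function on real^'n.\<close>

definition int_vec :: "real^'n \<Rightarrow> bool" where
  "int_vec z \<longleftrightarrow> (\<forall>i. z $ i \<in> \<int>)"

definition periodic :: "(real^'n \<Rightarrow> 'b) \<Rightarrow> bool" where
  "periodic f \<longleftrightarrow> (\<forall>x z. int_vec z \<longrightarrow> f (x + z) = f x)"

definition tonelli :: "(real^'n \<Rightarrow> real^'n \<Rightarrow> real) \<Rightarrow> bool" where
  "tonelli H \<longleftrightarrow>
     (\<forall>p. periodic (\<lambda>x. H x p)) \<and>
     (\<exists>(H' :: (real^'n) \<times> (real^'n) \<Rightarrow> ((real^'n) \<times> (real^'n)) \<Rightarrow>\<^sub>L real)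
        (H'' :: (real^'n) \<times> (real^'n) \<Rightarrow> ((real^'n) \<times> (real^'n)) \<Rightarrow>\<^sub>L (((real^'n) \<times> (real^'n)) \<Rightarrow>\<^sub>L real)).
        (\<forall>z. ((\<lambda>(x, p). H x p) has_derivative blinfun_apply (H' z)) (at z)) \<and>
        (\<forall>z. (H' has_derivative blinfun_apply (H'' z)) (at z)) \<and>
        continuous_on UNIV H'' \<and>
        (\<forall>x p w. w \<noteq> 0 \<longrightarrow> blinfun_apply (blinfun_apply (H'' (x, p)) (0, w)) (0, w) > 0)) \<and>
     (\<forall>A. \<exists>B. \<forall>x p. H x p \<ge> A * norm p - B)"

definition lagrangian :: "(real^'n \<Rightarrow> real^'n \<Rightarrow> real) \<Rightarrow> real^'n \<Rightarrow> real^'n \<Rightarrow> real" where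
  "lagrangian H x v = (SUP p. p \<bullet> v - H x p)"

definition Lcal :: "(real^'n \<Rightarrow> real^'n \<Rightarrow> real) \<Rightarrow> real \<Rightarrow> real^'n \<Rightarrow> real^'n \<Rightarrow> real" where
  "Lcal H \<tau> x y = \<tau> * lagrangian H x ((1 / \<tau>) *\<^sub>R (y - x))"

text \<open>u solves the discrete Lax--Oleinik equation with constant c (= Lbar(tau)).\<close>
definition solves_dLO :: "(real^'n \<Rightarrow> real^'n \<Rightarrow> real) \<Rightarrow> real \<Rightarrow> real \<Rightarrow> (real^'n \<Rightarrow> real) \<Rightarrow> bool" where
  "solves_dLO H \<tau> c u \<longleftrightarrow> (\<forall>y. u y + c * \<tau> = (INF x. u x + Lcal H \<tau> x y))"

text \<open>Calibrated configuration: xs k stands for x_{-k}; it is calibrated for u(xs 0).\<close>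
definition calibrated :: "(real^'n \<Rightarrow> real^'n \<Rightarrow> real) \<Rightarrow> real \<Rightarrow> real \<Rightarrow> (real^'n \<Rightarrow> real) \<Rightarrow> (nat \<Rightarrow> real^'n) \<Rightarrow> bool" where
  "calibrated H \<tau> c u xs \<longleftrightarrow>
     (\<forall>k. u (xs k) + \<tau> * c = u (xs (Suc k)) + Lcal H \<tau> (xs (Suc k)) (xs k))"

definition Sigma_set :: "(real^'n \<Rightarrow> real^'n \<Rightarrow> real) \<Rightarrow> real \<Rightarrow> real \<Rightarrow> (real^'n \<Rightarrow> real) \<Rightarrow> ((real^'n) \<times> (real^'n)) set" where
  "Sigma_set H \<tau> c u = {(x, v). \<exists>xs. calibrated H \<tau> c u xs \<and> xs 0 = x + \<tau> *\<^sub>R v \<and> xs 1 = x}"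

definition Psi :: "(real^'n \<Rightarrow> real^'n \<Rightarrow> real) \<Rightarrow> real \<Rightarrow> real \<Rightarrow> (real^'n \<Rightarrow> real) \<Rightarrow> nat
                   \<Rightarrow> ((real^'n) \<times> (real^'n)) set \<Rightarrow> ((real^'n) \<times> (real^'n)) set" where
  "Psi H \<tau> c u n S = {(xs (Suc n), (1 / \<tau>) *\<^sub>R (xs n - xs (Suc n))) | xs x v.
        (x, v) \<in> S \<and> calibrated H \<tau> c u xs \<and> xs 0 = x + \<tau> *\<^sub>R v \<and> xs 1 = x}"

text \<open>Lift of the discrete Aubry set to real^'n x real^'n (Z^d-invariant in x).\<close>
definition Aubry_lift :: "(real^'n \<Rightarrow> real^'n \<Rightarrow> real) \<Rightarrow> real \<Rightarrow> real \<Rightarrow> (real^'n \<Rightarrow> real) \<Rightarrow> ((real^'n) \<times> (real^'n)) set" where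
  "Aubry_lift H \<tau> c u = (\<Inter>n. Psi H \<tau> c u n (Sigma_set H \<tau> c u))"

text \<open>Embedding of T^d (as product of circles) and the projection T^d x R^d.\<close>
definition torus_proj :: "real^'n \<Rightarrow> complex^'n" where
  "torus_proj x = (\<chi> i. cis (2 * pi * x $ i))"

definition proj :: "(real^'n) \<times> (real^'n) \<Rightarrow> (complex^'n) \<times> (real^'n)" where
  "proj z = (torus_proj (fst z), snd z)"

definition Aubry_set :: "(real^'n \<Rightarrow> real^'n \<Rightarrow> real) \<Rightarrow> real \<Rightarrow> real \<Rightarrow> (real^'n \<Rightarrow> real) \<Rightarrow> ((complex^'n) \<times> (real^'n)) set" where
  "Aubry_set H \<tau> c u = proj ` Aubry_lift H \<tau> c u"

text \<open>Measures: probability measures on real^'n x real^'n, understood through their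
  push-forward to T^d x R^d (all integrands are periodic in x).\<close>

definition holonomic :: "real \<Rightarrow> ((real^'n) \<times> (real^'n)) measure \<Rightarrow> bool" where
  "holonomic \<tau> \<mu> \<longleftrightarrow> (\<forall>\<phi> :: real^'n \<Rightarrow> real. continuous_on UNIV \<phi> \<and> periodic \<phi> \<longrightarrow>
      integral\<^sup>L \<mu> (\<lambda>(x, v). \<phi> (x + \<tau> *\<^sub>R v) - \<phi> x) = 0)"

definition action :: "(real^'n \<Rightarrow> real^'n \<Rightarrow> real) \<Rightarrow> real \<Rightarrow> ((real^'n) \<times> (real^'n)) measure \<Rightarrow> real" where
  "action H \<tau> \<mu> = integral\<^sup>L \<mu> (\<lambda>(x, v). Lcal H \<tau> x (x + \<tau> *\<^sub>R v))"

definition admissible :: "(real^'n \<Rightarrow> real^'n \<Rightarrow> real) \<Rightarrow> real \<Rightarrow> ((real^'n) \<times> (real^'n)) measure \<Rightarrow> bool" where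
  "admissible H \<tau> \<mu> \<longleftrightarrow> prob_space \<mu> \<and> sets \<mu> = sets borel \<and> holonomic \<tau> \<mu> \<and>
      integrable \<mu> (\<lambda>(x, v). Lcal H \<tau> x (x + \<tau> *\<^sub>R v))"

definition mather_measure :: "(real^'n \<Rightarrow> real^'n \<Rightarrow> real) \<Rightarrow> real \<Rightarrow> ((real^'n) \<times> (real^'n)) measure \<Rightarrow> bool" where
  "mather_measure H \<tau> \<mu> \<longleftrightarrow> admissible H \<tau> \<mu> \<and>
      (\<forall>\<nu>. admissible H \<tau> \<nu> \<longrightarrow> action H \<tau> \<mu> \<le> action H \<tau> \<nu>)"

definition measure_support :: "'a::topological_space measure \<Rightarrow> 'a set" where
  "measure_support M = {z. \<forall>U. open U \<longrightarrow> z \<in> U \<longrightarrow> emeasure M U \<noteq> 0}"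

definition Mather_set :: "(real^'n \<Rightarrow> real^'n \<Rightarrow> real) \<Rightarrow> real \<Rightarrow> ((complex^'n) \<times> (real^'n)) set" where
  "Mather_set H \<tau> = closure (\<Union>{measure_support (distr \<mu> borel proj) | \<mu>. mather_measure H \<tau> \<mu>})"

end

theory Submission
  imports Defs
begin


definition fl :: "real^'n \<Rightarrow> real^'n" where
  "fl x = (\<chi> i. of_int \<lfloor>x $ i\<rfloor>)"

lemma int_vec_fl: "int_vec (fl x)"
  by (simp add: int_vec_def fl_def)

lemma int_vec_uminus: "int_vec z \<Longrightarrow> int_vec (- z)"
  by (simp add: int_vec_def)

lemma int_vec_add: "int_vec z \<Longrightarrow> int_vec w \<Longrightarrow> int_vec (z + w)"
  by (simp add: int_vec_def)

lemma int_vec_diff: "int_vec z \<Longrightarrow> int_vec w \<Longrightarrow> int_vec (z - w)"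
  by (simp add: int_vec_def)

lemma frac_lt1: "(x - fl x) $ i < 1" "0 \<le> (x - fl x) $ i"
  using frac_lt_1[of "x $ i"] frac_ge_0[of "x $ i"] by (simp_all add: fl_def frac_def)

lemma frac_cbox: "x - fl x \<in> cbox 0 1"
proof -
  have "(x - fl x)$i \<le> 1" for i using frac_lt1(1)[of x i] by simp
  then show ?thesis using frac_lt1(2) by (auto simp add: mem_box_cart)
qed

lemma periodic_shift: "periodic f \<Longrightarrow> int_vec z \<Longrightarrow> f (x + z) = f x"
  by (simp add: periodic_def)

lemma periodic_shift': "periodic f \<Longrightarrow> int_vec z \<Longrightarrow> f (x - z) = f x"
  by (metis periodic_def int_vec_uminus diff_conv_add_uminus)

lemma periodic_frac: "periodic f \<Longrightarrow> f (x - fl x) = f x"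
  by (simp add: periodic_shift' int_vec_fl)

lemma periodic_bounded_image:
  fixes f :: "real^'n \<Rightarrow> 'b::metric_space \<Rightarrow> 'c::real_normed_vector"
  assumes cont: "continuous_on UNIV (\<lambda>z. f (fst z) (snd z))"
    and per: "\<And>p. periodic (\<lambda>x. f x p)" and K: "compact K"
  shows "\<exists>B. \<forall>x. \<forall>p\<in>K. norm (f x p) \<le> B"
proof -
  have "compact ((\<lambda>z. f (fst z) (snd z)) ` (cbox 0 1 \<times> K))"
    by (intro compact_continuous_image continuous_on_subset[OF cont] compact_Times K) auto
  then obtain B where B: "\<And>w. w \<in> (\<lambda>z. f (fst z) (snd z)) ` (cbox 0 1 \<times> K) \<Longrightarrow> norm w \<le> B"
    using compact_imp_bounded bounded_iff by metis
  show ?thesis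
  proof (intro exI allI ballI)
    fix x p assume p: "p \<in> K"
    have "f x p = f (x - fl x) p" using periodic_frac[OF per[of p]] by simp
    also have "norm \<dots> \<le> B" using B[of "f (x - fl x) p"] frac_cbox p by force
    finally show "norm (f x p) \<le> B" .
  qed
qed

lemma periodic_bounded:
  fixes f :: "real^'n \<Rightarrow> real"
  assumes "continuous_on UNIV f" "periodic f"
  shows "\<exists>B. \<forall>x. \<bar>f x\<bar> \<le> B"
proof -
  have "\<exists>B. \<forall>x. \<forall>p\<in>{0::real}. norm (f x) \<le> B"
    by (rule periodic_bounded_image[where f="\<lambda>x p. f x"])
       (auto intro!: continuous_on_compose2[OF assms(1)] continuous_intros simp: assms(2))
  then show ?thesis by auto
qed

locale setting =
  fixes H :: "real^'n \<Rightarrow> real^'n \<Rightarrow> real" and \<tau> c :: real and u :: "real^'n \<Rightarrow> real"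
  assumes ton: "tonelli H" and tpos: "0 < \<tau>"
    and ucont: "continuous_on UNIV u" and uper: "periodic u"
    and dlo: "solves_dLO H \<tau> c u"
begin

lemma Hper: "periodic (\<lambda>x. H x p)"
  using ton by (simp add: tonelli_def)

lemma Hcont: "continuous_on UNIV (\<lambda>z. H (fst z) (snd z))"
proof -
  obtain H' where "\<forall>z. ((\<lambda>(x, p). H x p) has_derivative blinfun_apply (H' z)) (at z)"
    using ton unfolding tonelli_def by blast
  then have "continuous_on UNIV (\<lambda>(x, p). H x p)"
    by (intro has_derivative_continuous_on) (auto intro: has_derivative_at_withinI)
  then show ?thesis by (simp add: case_prod_beta')
qed

lemma Hsuper: "\<exists>B. \<forall>x p. H x p \<ge> A * norm p - B"
  using ton by (simp add: tonelli_def)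

lemma Hbound: "compact K \<Longrightarrow> \<exists>B. \<forall>x. \<forall>p\<in>K. \<bar>H x p\<bar> \<le> B"
  using periodic_bounded_image[OF Hcont Hper] by simp

lemma L_bdd: "bdd_above (range (\<lambda>p. p \<bullet> v - H x p))"
proof -
  obtain B where B: "\<And>x p. H x p \<ge> (norm v + 1) * norm p - B" using Hsuper by blast
  have "p \<bullet> v - H x p \<le> B" for p
  proof -
    have cs: "p \<bullet> v \<le> norm v * norm p" using norm_cauchy_schwarz[of p v] by (simp add: mult.commute)
    have "H x p \<ge> norm v * norm p + norm p - B" using B[where x=x and p=p] by (simp add: distrib_right)
    then show ?thesis using cs norm_ge_zero[of p] by linarith
  qed
  then show ?thesis by (auto simp: bdd_above_def intro!: exI[of _ B])
qed

lemma L_ge: "lagrangian H x v \<ge> p \<bullet> v - H x p"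
  unfolding lagrangian_def by (rule cSUP_upper[OF _ L_bdd]) simp

lemma L_le: "(\<And>p. p \<bullet> v - H x p \<le> t) \<Longrightarrow> lagrangian H x v \<le> t"
  unfolding lagrangian_def by (rule cSUP_least) auto

lemma L_per: "lagrangian H (x + z) v = lagrangian H x v" if "int_vec z"
  using periodic_shift[OF Hper that] by (simp add: lagrangian_def)

lemma L_coercive: "\<exists>C. \<forall>x v. lagrangian H x v \<ge> norm v - C"
proof -
  obtain C where C0: "\<forall>x. \<forall>p\<in>cball 0 1. \<bar>H x p\<bar> \<le> C" using Hbound[of "cball 0 1"] by auto
  have C: "\<bar>H x p\<bar> \<le> C" if "p \<in> cball 0 1" for x p using C0 that by blast
  have "lagrangian H x v \<ge> norm v - C" for x v
  proof (cases "v = 0")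
    case True
    then show ?thesis using L_ge[where p=0 and x=x and v=v] C[of 0 x] by simp
  next
    case False
    define p where "p = (1 / norm v) *\<^sub>R v"
    have "norm p = 1" using False by (simp add: p_def)
    moreover have "p \<bullet> v = norm v" using False by (simp add: p_def inner_commute power2_norm_eq_inner[symmetric] power2_eq_square)
    ultimately show ?thesis using L_ge[where p=p and x=x and v=v] C[of p x] by simp
  qed
  then show ?thesis by blast
qed

lemma L_lsc:
  assumes "(\<lambda>j. x j) \<longlonglongrightarrow> x0" "(\<lambda>j. v j) \<longlonglongrightarrow> v0" "(\<lambda>j. t j) \<longlonglongrightarrow> t0"
    and "\<And>j. lagrangian H (x j) (v j) \<le> t j"
  shows "lagrangian H x0 v0 \<le> t0"
proof (rule L_le)
  fix p
  have lim: "(\<lambda>j. p \<bullet> v j - H (x j) p) \<longlonglongrightarrow> p \<bullet> v0 - H x0 p"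
  proof (intro tendsto_intros assms)
    have "isCont (\<lambda>z. H (fst z) (snd z)) (x0, p)"
      using Hcont by (simp add: continuous_on_eq_continuous_at)
    then have "(\<lambda>j. H (fst (x j, p)) (snd (x j, p))) \<longlonglongrightarrow> H (fst (x0, p)) (snd (x0, p))"
      by (rule isCont_tendsto_compose) (intro tendsto_intros assms)
    then show "(\<lambda>j. H (x j) p) \<longlonglongrightarrow> H x0 p" by simp
  qed
  have le: "p \<bullet> v j - H (x j) p \<le> t j" for j using L_ge assms(4) order_trans by blast
  show "p \<bullet> v0 - H x0 p \<le> t0" by (rule LIMSEQ_le[OF lim assms(3)]) (use le in auto)
qed

end


context setting begin

definition "Ub = (SOME U. \<forall>x. \<bar>u x\<bar> \<le> U)"
definition "Cc = (SOME C. \<forall>x v. lagrangian H x v \<ge> norm v - C)"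

lemma tne: "\<tau> \<noteq> 0" using tpos by simp

lemma u_bound: "\<bar>u x\<bar> \<le> Ub"
  using someI_ex[OF periodic_bounded[OF ucont uper]] unfolding Ub_def by blast

lemma L_coer: "lagrangian H x v \<ge> norm v - Cc"
  using someI_ex[OF L_coercive] unfolding Cc_def by blast

lemma Lcal_eq: "Lcal H \<tau> x (x + \<tau> *\<^sub>R v) = \<tau> * lagrangian H x v"
  using tpos by (simp add: Lcal_def)

lemma Lcal_lower: "Lcal H \<tau> x y \<ge> norm (y - x) - \<tau> * Cc"
proof -
  have "lagrangian H x ((1 / \<tau>) *\<^sub>R (y - x)) \<ge> norm (y - x) / \<tau> - Cc"
    using L_coer[where x=x and v="(1 / \<tau>) *\<^sub>R (y - x)"] tpos by simp
  then have "\<tau> * lagrangian H x ((1 / \<tau>) *\<^sub>R (y - x)) \<ge> \<tau> * (norm (y - x) / \<tau> - Cc)"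
    using tpos by (simp add: mult_left_mono)
  then show ?thesis using tpos by (simp add: Lcal_def right_diff_distrib)
qed

lemma Lcal_per: "int_vec z \<Longrightarrow> Lcal H \<tau> (x + z) (y + z) = Lcal H \<tau> x y"
  by (simp add: Lcal_def L_per)

lemma Lcal_lsc:
  assumes "(\<lambda>j. x j) \<longlonglongrightarrow> x0" "(\<lambda>j. y j) \<longlonglongrightarrow> y0" "(\<lambda>j. t j) \<longlonglongrightarrow> t0"
    and "\<And>j. Lcal H \<tau> (x j) (y j) \<le> t j"
  shows "Lcal H \<tau> x0 y0 \<le> t0"
proof -
  have "lagrangian H x0 ((1 / \<tau>) *\<^sub>R (y0 - x0)) \<le> t0 / \<tau>"
  proof (rule L_lsc[OF assms(1)])
    show "(\<lambda>j. (1 / \<tau>) *\<^sub>R (y j - x j)) \<longlonglongrightarrow> (1 / \<tau>) *\<^sub>R (y0 - x0)"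
      by (intro tendsto_intros assms)
    show "(\<lambda>j. t j / \<tau>) \<longlonglongrightarrow> t0 / \<tau>" by (rule tendsto_divide[OF assms(3) tendsto_const tne])
    fix j show "lagrangian H (x j) ((1 / \<tau>) *\<^sub>R (y j - x j)) \<le> t j / \<tau>"
      using assms(4)[of j] tpos by (simp add: Lcal_def pos_le_divide_eq mult.commute)
  qed
  then show ?thesis using tpos by (simp add: Lcal_def pos_le_divide_eq mult.commute)
qed

lemma dlo_bdd: "bdd_below (range (\<lambda>x. u x + Lcal H \<tau> x y))"
proof -
  have "u x + Lcal H \<tau> x y \<ge> - Ub - \<tau> * Cc" for x
    using u_bound[of x] Lcal_lower[where x=x and y=y] norm_ge_zero[of "y - x"] by linarith
  then show ?thesis by (auto simp: bdd_below_def intro!: exI[of _ "- Ub - \<tau> * Cc"])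
qed

lemma dlo_eq: "u y + c * \<tau> = (INF x. u x + Lcal H \<tau> x y)"
  using dlo by (simp add: solves_dLO_def)

lemma dlo_le: "u y + \<tau> * c \<le> u x + Lcal H \<tau> x y"
  using cINF_lower[OF dlo_bdd, of x y] dlo_eq[of y] by (simp add: mult.commute)

lemma dlo_attain: "\<exists>x. u y + \<tau> * c = u x + Lcal H \<tau> x y"
proof -
  define m where "m = u y + c * \<tau>"
  have "\<exists>x. u x + Lcal H \<tau> x y < m + inverse (real (Suc j))" for j
  proof -
    have "(INF x. u x + Lcal H \<tau> x y) < m + inverse (real (Suc j))"
      using dlo_eq[of y] by (simp add: m_def)
    then show ?thesis using cINF_less_iff[OF UNIV_not_empty dlo_bdd] by auto
  qed
  then obtain xs where xs: "\<And>j. u (xs j) + Lcal H \<tau> (xs j) y < m + inverse (real (Suc j))"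
    by metis
  define R where "R = m + 1 + Ub + \<tau> * Cc"
  have xs_in: "xs j \<in> cball y R" for j
  proof -
    have "inverse (real (Suc j)) \<le> 1" by (simp add: inverse_le_1_iff)
    then have "norm (y - xs j) \<le> R"
      using xs[of j] u_bound[of "xs j"] Lcal_lower[where x="xs j" and y=y] unfolding R_def by linarith
    then show ?thesis by (simp add: dist_norm)
  qed
  obtain x0 r where x0: "x0 \<in> cball y R" and r: "strict_mono r" and lim: "(xs \<circ> r) \<longlonglongrightarrow> x0"
    using seq_compactE[OF compact_imp_seq_compact[OF compact_cball[of y R]], of xs] xs_in by blast
  have limu: "(\<lambda>j. u (xs (r j))) \<longlonglongrightarrow> u x0"
  proof -
    have "isCont u x0" using ucont by (simp add: continuous_on_eq_continuous_at)
    then show ?thesis using isCont_tendsto_compose lim by (fastforce simp: o_def)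
  qed
  have liminv: "(\<lambda>j. inverse (real (Suc (r j)))) \<longlonglongrightarrow> 0"
    using LIMSEQ_subseq_LIMSEQ[OF LIMSEQ_inverse_real_of_nat r] by (simp add: o_def)
  have "Lcal H \<tau> x0 y \<le> m - u x0"
  proof (rule Lcal_lsc)
    show "(\<lambda>j. (xs \<circ> r) j) \<longlonglongrightarrow> x0" using lim by (simp add: o_def)
    show "(\<lambda>j. y) \<longlonglongrightarrow> y" by simp
    show "(\<lambda>j. m + inverse (real (Suc (r j))) - u (xs (r j))) \<longlonglongrightarrow> m - u x0"
      using tendsto_diff[OF tendsto_add[OF tendsto_const liminv] limu] by simp
    fix j show "Lcal H \<tau> ((xs \<circ> r) j) y \<le> m + inverse (real (Suc (r j))) - u (xs (r j))"
      using xs[of "r j"] by simp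
  qed
  moreover have "u y + \<tau> * c \<le> u x0 + Lcal H \<tau> x0 y" by (rule dlo_le)
  ultimately show ?thesis unfolding m_def by (intro exI[of _ x0]) (simp add: mult.commute)
qed

definition "Rs = 2 * Ub + \<bar>c\<bar> * \<tau> + \<tau> * Cc"

lemma step_bound:
  assumes "u y + \<tau> * c = u x + Lcal H \<tau> x y"
  shows "norm (y - x) \<le> Rs"
proof -
  have a: "\<tau> * c \<le> \<bar>c\<bar> * \<tau>" using tpos by (simp add: mult.commute)
  have b: "u y \<le> Ub" "- u x \<le> Ub" using u_bound[of x] u_bound[of y] by (simp_all add: abs_le_iff)
  show ?thesis using assms a b Lcal_lower[where x=x and y=y] unfolding Rs_def by linarith
qed

definition "pred_pt y = (SOME x. u y + \<tau> * c = u x + Lcal H \<tau> x y)"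

lemma pred_pt: "u y + \<tau> * c = u (pred_pt y) + Lcal H \<tau> (pred_pt y) y"
  unfolding pred_pt_def by (rule someI_ex[OF dlo_attain])

definition "bconf y = (\<lambda>k. (pred_pt ^^ k) y)"

lemma bconf_calibrated: "calibrated H \<tau> c u (bconf y)"
  unfolding calibrated_def bconf_def by (simp add: pred_pt)

lemma bconf_0: "bconf y 0 = y"
  by (simp add: bconf_def)

definition "Zset = {(x, v). u (x + \<tau> *\<^sub>R v) + \<tau> * c = u x + Lcal H \<tau> x (x + \<tau> *\<^sub>R v)}"

definition "Rv = Rs / \<tau>"

lemma Z_bound: "(x, v) \<in> Zset \<Longrightarrow> norm v \<le> Rv"
  using step_bound[of "x + \<tau> *\<^sub>R v" x] tpos unfolding Zset_def Rv_def
  by (simp add: pos_le_divide_eq mult.commute)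

lemma Z_per: "(x, v) \<in> Zset \<Longrightarrow> int_vec z \<Longrightarrow> (x + z, v) \<in> Zset"
proof -
  assume a: "(x, v) \<in> Zset" and z: "int_vec z"
  have "u (x + z + \<tau> *\<^sub>R v) = u (x + \<tau> *\<^sub>R v)"
    using periodic_shift[OF uper z, of "x + \<tau> *\<^sub>R v"] by (simp add: ac_simps)
  moreover have "Lcal H \<tau> (x + z) (x + z + \<tau> *\<^sub>R v) = Lcal H \<tau> x (x + \<tau> *\<^sub>R v)"
    using Lcal_per[OF z, of x "x + \<tau> *\<^sub>R v"] by (simp add: ac_simps)
  moreover have "u (x + z) = u x" using periodic_shift[OF uper z] .
  ultimately show ?thesis using a by (simp add: Zset_def)
qed

lemma Z_closed: "closed Zset"
proof (rule closed_sequential_limits[THEN iffD2], intro allI impI, elim conjE)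
  fix s and l :: "(real^'n) \<times> (real^'n)"
  assume sZ: "\<forall>j. s j \<in> Zset" and lim: "s \<longlonglongrightarrow> l"
  obtain x v where l: "l = (x, v)" by (cases l)
  define xj where "xj j = fst (s j)" for j
  define vj where "vj j = snd (s j)" for j
  have limx: "xj \<longlonglongrightarrow> x" using tendsto_fst[OF lim] l by (simp add: xj_def[abs_def])
  have limv: "vj \<longlonglongrightarrow> v" using tendsto_snd[OF lim] l by (simp add: vj_def[abs_def])
  have limy: "(\<lambda>j. xj j + \<tau> *\<^sub>R vj j) \<longlonglongrightarrow> x + \<tau> *\<^sub>R v" by (intro tendsto_intros limx limv)
  have uc: "\<And>a f F. (f \<longlongrightarrow> a) F \<Longrightarrow> ((\<lambda>j. u (f j)) \<longlongrightarrow> u a) F"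
    by (rule continuous_on_tendsto_compose[OF ucont]) auto
  have eq: "Lcal H \<tau> (xj j) (xj j + \<tau> *\<^sub>R vj j) = u (xj j + \<tau> *\<^sub>R vj j) + \<tau> * c - u (xj j)" for j
    using sZ[rule_format, of j] by (cases "s j") (simp add: Zset_def xj_def vj_def)
  have "Lcal H \<tau> x (x + \<tau> *\<^sub>R v) \<le> u (x + \<tau> *\<^sub>R v) + \<tau> * c - u x"
    by (rule Lcal_lsc[OF limx limy, where t="\<lambda>j. u (xj j + \<tau> *\<^sub>R vj j) + \<tau> * c - u (xj j)"])
       (use eq in \<open>auto intro!: tendsto_intros uc limy limx\<close>)
  moreover have "u (x + \<tau> *\<^sub>R v) + \<tau> * c \<le> u x + Lcal H \<tau> x (x + \<tau> *\<^sub>R v)" by (rule dlo_le)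
  ultimately show "l \<in> Zset" using l by (simp add: Zset_def)
qed

lemma calibrated_Z:
  assumes "calibrated H \<tau> c u xs"
  shows "(xs (Suc k), (1 / \<tau>) *\<^sub>R (xs k - xs (Suc k))) \<in> Zset"
  using assms tpos unfolding calibrated_def Zset_def by simp

lemma Z_nonempty: "Zset \<noteq> {}"
  using calibrated_Z[OF bconf_calibrated, of 0 0] by blast

lemma L_meas: "(\<lambda>z. lagrangian H (fst z) (snd z)) \<in> borel_measurable borel"
proof (rule borel_measurable_iff_le[THEN iffD2], intro allI)
  fix a
  have "closed {w. lagrangian H (fst w) (snd w) \<le> a}"
  proof (rule closed_sequential_limits[THEN iffD2], intro allI impI, elim conjE)
    fix s and l :: "(real^'n) \<times> (real^'n)"
    assume "\<forall>j. s j \<in> {w. lagrangian H (fst w) (snd w) \<le> a}" and lim: "s \<longlonglongrightarrow> l"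
    then have le: "\<And>j. lagrangian H (fst (s j)) (snd (s j)) \<le> a" by simp
    have "lagrangian H (fst l) (snd l) \<le> a"
      by (rule L_lsc[OF tendsto_fst[OF lim] tendsto_snd[OF lim] tendsto_const le])
    then show "l \<in> {w. lagrangian H (fst w) (snd w) \<le> a}" by simp
  qed
  then show "{w \<in> space borel. lagrangian H (fst w) (snd w) \<le> a} \<in> sets borel"
    by (simp add: borel_closed)
qed

lemma Lcal_meas: "(\<lambda>(x, v). Lcal H \<tau> x (x + \<tau> *\<^sub>R v)) \<in> borel_measurable borel"
proof -
  have "(\<lambda>(x, v). Lcal H \<tau> x (x + \<tau> *\<^sub>R v)) = (\<lambda>z. \<tau> * lagrangian H (fst z) (snd z))"
    by (auto simp: Lcal_eq)
  then show ?thesis using L_meas by simp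
qed

end


context setting begin

lemma Psi_Sigma: "Psi H \<tau> c u n (Sigma_set H \<tau> c u) =
   {(xs (Suc n), (1 / \<tau>) *\<^sub>R (xs n - xs (Suc n))) | xs. calibrated H \<tau> c u xs}"
proof (intro equalityI subsetI)
  fix w assume "w \<in> Psi H \<tau> c u n (Sigma_set H \<tau> c u)"
  then show "w \<in> {(xs (Suc n), (1 / \<tau>) *\<^sub>R (xs n - xs (Suc n))) | xs. calibrated H \<tau> c u xs}"
    unfolding Psi_def by blast
next
  fix w assume "w \<in> {(xs (Suc n), (1 / \<tau>) *\<^sub>R (xs n - xs (Suc n))) | xs. calibrated H \<tau> c u xs}"
  then obtain xs where w: "w = (xs (Suc n), (1 / \<tau>) *\<^sub>R (xs n - xs (Suc n)))" and cal: "calibrated H \<tau> c u xs"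
    by blast
  define x where "x = xs 1"
  define v where "v = (1 / \<tau>) *\<^sub>R (xs 0 - xs 1)"
  have e0: "xs 0 = x + \<tau> *\<^sub>R v" using tne by (simp add: x_def v_def)
  have "(x, v) \<in> Sigma_set H \<tau> c u" unfolding Sigma_set_def using cal e0 x_def by blast
  then show "w \<in> Psi H \<tau> c u n (Sigma_set H \<tau> c u)" unfolding Psi_def using w cal e0 x_def by blast
qed

lemma AL_char: "(x, v) \<in> Aubry_lift H \<tau> c u \<longleftrightarrow>
   (\<forall>n. \<exists>xs. calibrated H \<tau> c u xs \<and> xs (Suc n) = x \<and> xs n = x + \<tau> *\<^sub>R v)"
proof -
  have "(x, v) \<in> Psi H \<tau> c u n (Sigma_set H \<tau> c u) \<longleftrightarrow>
        (\<exists>xs. calibrated H \<tau> c u xs \<and> xs (Suc n) = x \<and> xs n = x + \<tau> *\<^sub>R v)" for n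
  proof -
    have "(\<exists>xs. (x, v) = (xs (Suc n), (1 / \<tau>) *\<^sub>R (xs n - xs (Suc n))) \<and> calibrated H \<tau> c u xs) \<longleftrightarrow>
        (\<exists>xs. calibrated H \<tau> c u xs \<and> xs (Suc n) = x \<and> xs n = x + \<tau> *\<^sub>R v)"
    proof (intro iffI; elim exE conjE)
      fix xs assume "(x, v) = (xs (Suc n), (1 / \<tau>) *\<^sub>R (xs n - xs (Suc n)))" "calibrated H \<tau> c u xs"
      then show "\<exists>xs. calibrated H \<tau> c u xs \<and> xs (Suc n) = x \<and> xs n = x + \<tau> *\<^sub>R v"
        using tne by (intro exI[of _ xs]) auto
    next
      fix xs assume "calibrated H \<tau> c u xs" "xs (Suc n) = x" "xs n = x + \<tau> *\<^sub>R v"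
      then show "\<exists>xs. (x, v) = (xs (Suc n), (1 / \<tau>) *\<^sub>R (xs n - xs (Suc n))) \<and> calibrated H \<tau> c u xs"
        using tne by (intro exI[of _ xs]) auto
    qed
    then show ?thesis unfolding Psi_Sigma by blast
  qed
  then show ?thesis unfolding Aubry_lift_def by blast
qed

lemma AL_Z: "w \<in> Aubry_lift H \<tau> c u \<Longrightarrow> w \<in> Zset"
proof -
  assume "w \<in> Aubry_lift H \<tau> c u"
  moreover obtain x v where w: "w = (x, v)" by (cases w)
  ultimately obtain xs where "calibrated H \<tau> c u xs" "xs (Suc 0) = x" "xs 0 = x + \<tau> *\<^sub>R v"
    using AL_char by blast
  then show ?thesis using w unfolding calibrated_def Zset_def by (auto dest: spec[of _ 0])
qed

lemma calibrated_shift: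
  assumes "calibrated H \<tau> c u xs" "int_vec z"
  shows "calibrated H \<tau> c u (\<lambda>k. xs k + z)"
  using assms unfolding calibrated_def by (simp add: periodic_shift[OF uper] Lcal_per)

lemma AL_per: "(x, v) \<in> Aubry_lift H \<tau> c u \<Longrightarrow> int_vec z \<Longrightarrow> (x + z, v) \<in> Aubry_lift H \<tau> c u"
proof -
  assume a: "(x, v) \<in> Aubry_lift H \<tau> c u" and z: "int_vec z"
  show ?thesis unfolding AL_char
  proof
    fix n
    obtain xs where "calibrated H \<tau> c u xs" "xs (Suc n) = x" "xs n = x + \<tau> *\<^sub>R v"
      using a AL_char by blast
    then show "\<exists>xs. calibrated H \<tau> c u xs \<and> xs (Suc n) = x + z \<and> xs n = x + z + \<tau> *\<^sub>R v"
      using calibrated_shift[OF _ z] by (intro exI[of _ "\<lambda>k. xs k + z"]) (auto simp: ac_simps)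
  qed
qed

lemma calibrated_step: "calibrated H \<tau> c u xs \<Longrightarrow> norm (xs k - xs (Suc k)) \<le> Rs"
  unfolding calibrated_def by (rule step_bound) blast

lemma calibrated_dist:
  assumes "calibrated H \<tau> c u xs"
  shows "norm (xs k - xs m) \<le> (real k + real m) * Rs"
proof -
  have Rs0: "Rs \<ge> 0" using calibrated_step[OF assms, of 0] norm_ge_zero order_trans by blast
  have a: "norm (xs k - xs 0) \<le> real k * Rs" for k
  proof (induction k)
    case 0 then show ?case by simp
  next
    case (Suc k)
    have e: "xs (Suc k) - xs 0 = (xs k - xs 0) - (xs k - xs (Suc k))" by simp
    have "norm (xs (Suc k) - xs 0) \<le> norm (xs k - xs 0) + norm (xs k - xs (Suc k))"
      unfolding e by (rule norm_triangle_ineq4)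
    also have "\<dots> \<le> Rs + real k * Rs" using Suc calibrated_step[OF assms, of k] by simp
    finally show ?case by (simp add: algebra_simps)
  qed
  have "norm (xs k - xs m) \<le> norm (xs k - xs 0) + norm (xs m - xs 0)"
    using norm_triangle_ineq4[of "xs k - xs 0" "xs m - xs 0"] by simp
  then show ?thesis using a[of k] a[of m] by (simp add: algebra_simps)
qed

lemma calibrated_limit:
  assumes cal: "\<And>j. calibrated H \<tau> c u (xs j)"
    and lim: "\<And>k. (\<lambda>j. xs j k) \<longlonglongrightarrow> X k"
  shows "calibrated H \<tau> c u X"
  unfolding calibrated_def
proof
  fix k
  have uc: "\<And>a f F. (f \<longlongrightarrow> a) F \<Longrightarrow> ((\<lambda>j. u (f j)) \<longlongrightarrow> u a) F"
    by (rule continuous_on_tendsto_compose[OF ucont]) auto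
  have eq: "Lcal H \<tau> (xs j (Suc k)) (xs j k) = u (xs j k) + \<tau> * c - u (xs j (Suc k))" for j
    using cal[of j] unfolding calibrated_def by (metis add_diff_cancel_left')
  have "Lcal H \<tau> (X (Suc k)) (X k) \<le> u (X k) + \<tau> * c - u (X (Suc k))"
    by (rule Lcal_lsc[OF lim lim, where t="\<lambda>j. u (xs j k) + \<tau> * c - u (xs j (Suc k))"])
       (use eq in \<open>auto intro!: tendsto_intros uc lim\<close>)
  moreover have "u (X k) + \<tau> * c \<le> u (X (Suc k)) + Lcal H \<tau> (X (Suc k)) (X k)" by (rule dlo_le)
  ultimately show "u (X k) + \<tau> * c = u (X (Suc k)) + Lcal H \<tau> (X (Suc k)) (X k)" by simp
qed

lemma calibrated_compact:
  fixes xs :: "nat \<Rightarrow> nat \<Rightarrow> real^'n"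
  assumes cal: "\<And>j. calibrated H \<tau> c u (xs j)" and bd: "\<And>j. norm (xs j m) \<le> B"
  obtains X r where "strict_mono r" "calibrated H \<tau> c u X" "\<And>k. (\<lambda>j. xs (r j) k) \<longlonglongrightarrow> X k"
proof -
  define S where "S = PiE UNIV (\<lambda>k::nat. cball (0::real^'n) (B + (real k + real m) * Rs))"
  have "compact S"
  proof -
    have "compactin (product_topology (\<lambda>i. euclidean) UNIV) S"
      unfolding S_def compactin_PiE by simp
    then show ?thesis by (simp add: euclidean_product_topology)
  qed
  moreover have "xs j \<in> S" for j
  proof -
    have "norm (xs j k) \<le> B + (real k + real m) * Rs" for k
    proof -
      have "norm (xs j k) \<le> norm (xs j m) + norm (xs j k - xs j m)"
        using norm_triangle_ineq[of "xs j m" "xs j k - xs j m"] by simp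
      then show ?thesis using bd[of j] calibrated_dist[OF cal[of j], of k m] by simp
    qed
    then show ?thesis unfolding S_def by (simp add: PiE_def extensional_def)
  qed
  ultimately obtain X r where X: "X \<in> S" and r: "strict_mono r" and lim: "(xs \<circ> r) \<longlonglongrightarrow> X"
    using seq_compactE[OF compact_imp_seq_compact, of S xs] by blast
  have limk: "(\<lambda>j. xs (r j) k) \<longlonglongrightarrow> X k" for k
  proof -
    have "((\<lambda>f. f k) \<circ> (xs \<circ> r)) \<longlonglongrightarrow> X k"
      using continuous_on_tendsto_compose[OF continuous_on_product_coordinates lim] by (simp add: o_def)
    then show ?thesis by (simp add: o_def)
  qed
  show ?thesis
    by (rule that[OF r calibrated_limit[OF _ limk] limk]) (rule cal)
qed

lemma AL_closed: "closed (Aubry_lift H \<tau> c u)"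
proof (rule closed_sequential_limits[THEN iffD2], intro allI impI, elim conjE)
  fix s and l :: "(real^'n) \<times> (real^'n)"
  assume sA: "\<forall>j. s j \<in> Aubry_lift H \<tau> c u" and lim: "s \<longlonglongrightarrow> l"
  obtain x v where l: "l = (x, v)" by (cases l)
  have limx: "(\<lambda>j. fst (s j)) \<longlonglongrightarrow> x" using tendsto_fst[OF lim] l by simp
  have limv: "(\<lambda>j. snd (s j)) \<longlonglongrightarrow> v" using tendsto_snd[OF lim] l by simp
  obtain B where B: "\<And>j. norm (fst (s j)) \<le> B"
    using convergent_imp_Bseq[OF convergentI[OF limx]] unfolding Bseq_def by (meson less_imp_le)
  show "l \<in> Aubry_lift H \<tau> c u" unfolding l AL_char
  proof
    fix n
    have "\<exists>xs. calibrated H \<tau> c u xs \<and> xs (Suc n) = fst (s j) \<and> xs n = fst (s j) + \<tau> *\<^sub>R snd (s j)" for j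
      using sA[rule_format, of j] AL_char[of "fst (s j)" "snd (s j)"] by simp
    then obtain xs where xs: "\<And>j. calibrated H \<tau> c u (xs j)" "\<And>j. xs j (Suc n) = fst (s j)"
        "\<And>j. xs j n = fst (s j) + \<tau> *\<^sub>R snd (s j)"
      by metis
    obtain X r where r: "strict_mono r" and X: "calibrated H \<tau> c u X" and limX: "\<And>k. (\<lambda>j. xs (r j) k) \<longlonglongrightarrow> X k"
      using calibrated_compact[of xs "Suc n" B] xs B by metis
    have "(\<lambda>j. fst (s (r j))) \<longlonglongrightarrow> x" using LIMSEQ_subseq_LIMSEQ[OF limx r] by (simp add: o_def)
    moreover have "(\<lambda>j. fst (s (r j))) \<longlonglongrightarrow> X (Suc n)" using limX[of "Suc n"] xs(2) by simp
    ultimately have e1: "X (Suc n) = x" using LIMSEQ_unique by blast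
    have "(\<lambda>j. fst (s (r j)) + \<tau> *\<^sub>R snd (s (r j))) \<longlonglongrightarrow> x + \<tau> *\<^sub>R v"
      using LIMSEQ_subseq_LIMSEQ[OF limx r] LIMSEQ_subseq_LIMSEQ[OF limv r]
      by (auto simp: o_def intro!: tendsto_intros)
    moreover have "(\<lambda>j. fst (s (r j)) + \<tau> *\<^sub>R snd (s (r j))) \<longlonglongrightarrow> X n" using limX[of n] xs(3) by simp
    ultimately have e2: "X n = x + \<tau> *\<^sub>R v" using LIMSEQ_unique by blast
    show "\<exists>xs. calibrated H \<tau> c u xs \<and> xs (Suc n) = x \<and> xs n = x + \<tau> *\<^sub>R v"
      using X e1 e2 by blast
  qed
qed

end


definition tmul :: "complex^'n \<Rightarrow> complex^'n \<Rightarrow> complex^'n" where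
  "tmul a b = (\<chi> i. a $ i * b $ i)"

lemma tp_add: "torus_proj (x + y) = tmul (torus_proj x) (torus_proj y)"
  by (simp add: torus_proj_def tmul_def cis_mult distrib_left)

lemma tp_int: "int_vec z \<Longrightarrow> torus_proj (x + z) = torus_proj x"
proof -
  assume z: "int_vec z"
  have "torus_proj z = (\<chi> i. 1)" using z cis_multiple_2pi by (simp add: torus_proj_def int_vec_def)
  then show ?thesis unfolding tp_add tmul_def by simp
qed

lemma tp_tmul_assoc: "tmul (tmul a b) d = tmul a (tmul b d)"
  by (simp add: tmul_def mult.assoc)

lemma cis_2pi_eq: "cis (2 * pi * a) = cis (2 * pi * b) \<Longrightarrow> a - b \<in> \<int>"
proof -
  assume "cis (2 * pi * a) = cis (2 * pi * b)"
  then have "exp (\<i> * complex_of_real (2 * pi * a)) = exp (\<i> * complex_of_real (2 * pi * b))"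
    by (simp add: cis_conv_exp)
  then obtain n :: int where n: "\<i> * complex_of_real (2 * pi * a) = \<i> * complex_of_real (2 * pi * b) + complex_of_real (real_of_int (2 * n) * pi) * \<i>"
    using exp_eq by blast
  then have "Im (\<i> * complex_of_real (2 * pi * a)) = Im (\<i> * complex_of_real (2 * pi * b) + complex_of_real (real_of_int (2 * n) * pi) * \<i>)"
    by simp
  then have "2 * pi * a = 2 * pi * b + 2 * real_of_int n * pi" by simp
  then have "2 * pi * a = 2 * pi * (b + real_of_int n)" by (simp add: algebra_simps)
  then have "a = b + real_of_int n" by simp
  then show ?thesis by simp
qed

lemma tp_eq: "torus_proj x = torus_proj y \<Longrightarrow> int_vec (y - x)"
proof -
  assume e: "torus_proj x = torus_proj y"
  have "cis (2 * pi * y $ i) = cis (2 * pi * x $ i)" for i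
    using arg_cong[OF e, of "\<lambda>w. w $ i"] by (simp add: torus_proj_def)
  then show ?thesis using cis_2pi_eq by (simp add: int_vec_def)
qed

lemma tp_cont: "continuous_on UNIV torus_proj"
  unfolding torus_proj_def by (intro continuous_on_vec_lambda continuous_intros)

lemma tp_isCont: "isCont torus_proj x"
  using tp_cont by (auto simp: continuous_on_eq_continuous_at)

lemma proj_cont: "continuous_on UNIV proj"
  unfolding proj_def by (intro continuous_intros continuous_on_compose2[OF tp_cont]) auto

lemma tmul_cont: "continuous_on UNIV (\<lambda>z. tmul (fst z) (snd z))"
  unfolding tmul_def by (intro continuous_on_vec_lambda continuous_intros)

lemma proj_eq_iff: "proj (x, v) = proj (y, w) \<longleftrightarrow> torus_proj x = torus_proj y \<and> v = w"
  by (simp add: proj_def)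

definition "per_set A \<longleftrightarrow> (\<forall>x v z. (x, v) \<in> A \<longrightarrow> int_vec z \<longrightarrow> (x + z, v) \<in> A)"

lemma per_set_tp:
  assumes "per_set A" "(x, v) \<in> A" "torus_proj x = torus_proj y"
  shows "(y, v) \<in> A"
proof -
  have "int_vec (y - x)" using tp_eq assms(3) by blast
  then have "(x + (y - x), v) \<in> A" using assms unfolding per_set_def by blast
  then show ?thesis by simp
qed

lemma per_set_proj: "per_set A \<Longrightarrow> proj w \<in> proj ` A \<Longrightarrow> w \<in> A"
  by (cases w) (auto simp: proj_def intro: per_set_tp)

lemma per_image:
  assumes "per_set A"
  shows "proj ` A = proj ` (A \<inter> (cbox 0 1 \<times> UNIV))"
proof (intro equalityI subsetI)
  fix w assume "w \<in> proj ` A"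
  then obtain x v where xv: "(x, v) \<in> A" "w = proj (x, v)" by auto
  have "(x + - fl x, v) \<in> A" using assms xv int_vec_uminus[OF int_vec_fl] unfolding per_set_def by blast
  moreover have "proj (x + - fl x, v) = w" using xv tp_int[OF int_vec_uminus[OF int_vec_fl]] by (simp add: proj_def)
  moreover have "x + - fl x \<in> cbox 0 1" using frac_cbox[of x] by simp
  ultimately show "w \<in> proj ` (A \<inter> (cbox 0 1 \<times> UNIV))" by force
qed auto

lemma per_image_compact:
  assumes "per_set A" "closed A" "\<And>x v. (x, v) \<in> A \<Longrightarrow> norm v \<le> R"
  shows "compact (proj ` A)"
proof -
  have "A \<inter> (cbox 0 1 \<times> UNIV) = A \<inter> (cbox 0 1 \<times> cball 0 R)" using assms(3) by auto
  moreover have "compact (A \<inter> (cbox 0 1 \<times> cball 0 R))"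
    by (intro closed_Int_compact assms compact_Times compact_cbox compact_cball)
  ultimately have "compact (proj ` (A \<inter> (cbox 0 1 \<times> UNIV)))"
    by (metis compact_continuous_image continuous_on_subset[OF proj_cont] subset_UNIV)
  then show ?thesis using per_image[OF assms(1)] by simp
qed

context setting begin

lemma Z_per_set: "per_set Zset"
  unfolding per_set_def using Z_per by blast

lemma AL_per_set: "per_set (Aubry_lift H \<tau> c u)"
  unfolding per_set_def using AL_per by blast

lemma Zhat_compact: "compact (proj ` Zset)"
  by (rule per_image_compact[OF Z_per_set Z_closed Z_bound])

lemma Aubry_compact: "compact (Aubry_set H \<tau> c u)"
  unfolding Aubry_set_def
  by (rule per_image_compact[OF AL_per_set AL_closed]) (rule Z_bound[OF AL_Z])

end


lemma space_borel_sets: "sets M = sets borel \<Longrightarrow> space M = UNIV"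
  using sets_eq_imp_space_eq by fastforce

lemma meas_borelI: "f \<in> borel_measurable borel \<Longrightarrow> sets M = sets borel \<Longrightarrow> f \<in> borel_measurable M"
  using measurable_cong_sets[of M borel borel borel] by simp

lemma meas_borelI': "f \<in> borel \<rightarrow>\<^sub>M N \<Longrightarrow> sets M = sets borel \<Longrightarrow> f \<in> M \<rightarrow>\<^sub>M N"
  using measurable_cong_sets[of M borel N N] by simp

lemma integrable_bounded_cont:
  fixes f :: "'a::topological_space \<Rightarrow> real"
  assumes "finite_measure M" "sets M = sets borel" "continuous_on UNIV f" "\<And>x. \<bar>f x\<bar> \<le> B"
  shows "integrable M f"
  by (rule finite_measure.integrable_const_bound[OF assms(1), where B=B])
     (use assms in \<open>auto intro!: meas_borelI borel_measurable_continuous_onI\<close>)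

lemma supp_closed: "closed (measure_support M)"
proof -
  have "open (- measure_support M)"
  proof (rule open_subopen[THEN iffD2], intro ballI)
    fix x assume "x \<in> - measure_support M"
    then obtain U where U: "open U" "x \<in> U" "emeasure M U = 0" by (auto simp: measure_support_def)
    then have "U \<subseteq> - measure_support M" by (auto simp: measure_support_def)
    then show "\<exists>T. open T \<and> x \<in> T \<and> T \<subseteq> - measure_support M" using U by blast
  qed
  then show ?thesis by (simp add: closed_def)
qed

lemma supp_AE:
  fixes M :: "'a::second_countable_topology measure"
  assumes sets: "sets M = sets borel"
  shows "AE w in M. w \<in> measure_support M"
proof -
  obtain B :: "'a set set" where B: "countable B" "topological_basis B" using ex_countable_basis by blast
  define N where "N = \<Union> ((\<lambda>b. b) ` {b \<in> B. emeasure M b = 0})"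
  have "N \<in> null_sets M" unfolding N_def
  proof (rule null_sets_UN')
    show "countable {b \<in> B. emeasure M b = 0}" using B(1) by (rule countable_subset[rotated]) auto
    fix b assume "b \<in> {b \<in> B. emeasure M b = 0}"
    then show "b \<in> null_sets M" using topological_basis_open[OF B(2)] sets
      by (auto simp: null_sets_def borel_open)
  qed
  moreover have "{x \<in> space M. x \<notin> measure_support M} \<subseteq> N"
  proof
    fix x assume "x \<in> {x \<in> space M. x \<notin> measure_support M}"
    then obtain U where U: "open U" "x \<in> U" "emeasure M U = 0" by (auto simp: measure_support_def)
    then obtain b where b: "b \<in> B" "x \<in> b" "b \<subseteq> U" using topological_basisE[OF B(2)] by metis
    have "emeasure M b \<le> emeasure M U"
      by (rule emeasure_mono[OF b(3)]) (use U sets in \<open>simp add: borel_open\<close>)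
    then have "emeasure M b = 0" using U by simp
    then show "x \<in> N" using b unfolding N_def by blast
  qed
  ultimately show ?thesis by (rule AE_I')
qed

lemma AE_open_null:
  assumes sets: "sets M = sets borel" and "open U" and "AE w in M. w \<notin> U"
  shows "emeasure M U = 0"
proof -
  have "{x \<in> space M. \<not> x \<notin> U} = U" using space_borel_sets[OF sets] by auto
  then show ?thesis using AE_iff_measurable[of U M "\<lambda>w. w \<notin> U"] assms by (simp add: borel_open)
qed

lemma supp_subset_closed:
  assumes sets: "sets M = sets borel" and "closed C" and "AE w in M. w \<in> C"
  shows "measure_support M \<subseteq> C"
proof
  fix w assume w: "w \<in> measure_support M"
  show "w \<in> C"
  proof (rule ccontr)
    assume "w \<notin> C"
    moreover have "emeasure M (- C) = 0" using AE_open_null[OF sets, of "- C"] assms by auto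
    ultimately show False using w assms(2) unfolding measure_support_def by (auto simp: open_Compl)
  qed
qed

lemma supp_nonempty:
  fixes M :: "'a::second_countable_topology measure"
  assumes "prob_space M" "sets M = sets borel"
  shows "measure_support M \<noteq> {}"
proof
  assume "measure_support M = {}"
  then have "AE w in M. False" using supp_AE[OF assms(2)] by simp
  then show False using prob_space.AE_False[OF assms(1)] by simp
qed

lemma supp_zero:
  fixes h :: "'a::second_countable_topology \<Rightarrow> real"
  assumes P: "prob_space M" and sets: "sets M = sets borel" and cont: "continuous_on UNIV h"
    and nn: "\<And>w. 0 \<le> h w" and bd: "\<And>w. h w \<le> B" and int0: "integral\<^sup>L M h = 0"
    and w: "w \<in> measure_support M"
  shows "h w = 0"
proof (rule ccontr)
  assume hw: "h w \<noteq> 0"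
  have "integrable M h"
    by (rule integrable_bounded_cont[OF prob_space.finite_measure[OF P] sets cont, where B=B])
       (use nn bd in \<open>auto simp: abs_le_iff intro: order_trans[OF _ nn]\<close>)
  then have "AE x in M. h x = 0" using integral_nonneg_eq_0_iff_AE[of M h] int0 nn by simp
  then have ae: "AE x in M. x \<notin> {x. 0 < h x}" by auto
  have op: "open {x. 0 < h x}" using open_Collect_less[OF continuous_on_const cont] by simp
  have "emeasure M {x. 0 < h x} = 0" by (rule AE_open_null[OF sets op ae])
  moreover have "w \<in> {x. 0 < h x}" using hw nn[of w] by simp
  ultimately show False using w op unfolding measure_support_def by blast
qed

context setting begin

lemma dlo_le': "\<tau> * c + u (x + \<tau> *\<^sub>R v) \<le> u x + Lcal H \<tau> x (x + \<tau> *\<^sub>R v)"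
  using dlo_le[where y="x + \<tau> *\<^sub>R v" and x=x] by linarith

lemma g_cont: "continuous_on UNIV (\<lambda>z. u (fst z + \<tau> *\<^sub>R snd z) - u (fst z) + \<tau> * c)"
  by (intro continuous_intros continuous_on_compose2[OF ucont]) auto

lemma g_bound: "\<bar>u (fst z + \<tau> *\<^sub>R snd z) - u (fst z) + \<tau> * c\<bar> \<le> 2 * Ub + \<bar>\<tau> * c\<bar>"
  using u_bound[of "fst z + \<tau> *\<^sub>R snd z"] u_bound[of "fst z"] by (simp add: abs_le_iff) linarith

lemma per_integral:
  fixes \<phi> :: "real^'n \<Rightarrow> real"
  assumes adm: "prob_space \<mu>" "sets \<mu> = sets borel" "holonomic \<tau> \<mu>"
    and cont: "continuous_on UNIV \<phi>" and per: "periodic \<phi>"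
  shows "integral\<^sup>L \<mu> (\<lambda>z. \<phi> (fst z + \<tau> *\<^sub>R snd z)) = integral\<^sup>L \<mu> (\<lambda>z. \<phi> (fst z))"
proof -
  obtain B where B: "\<And>x. \<bar>\<phi> x\<bar> \<le> B" using periodic_bounded[OF cont per] by blast
  have fm: "finite_measure \<mu>" using adm(1) prob_space.finite_measure by blast
  have i1: "integrable \<mu> (\<lambda>z. \<phi> (fst z + \<tau> *\<^sub>R snd z))"
    by (rule integrable_bounded_cont[OF fm adm(2), where B=B])
       (auto intro!: continuous_intros continuous_on_compose2[OF cont] simp: B)
  have i2: "integrable \<mu> (\<lambda>z. \<phi> (fst z))"
    by (rule integrable_bounded_cont[OF fm adm(2), where B=B])
       (auto intro!: continuous_intros continuous_on_compose2[OF cont] simp: B)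
  have "integral\<^sup>L \<mu> (\<lambda>(x, v). \<phi> (x + \<tau> *\<^sub>R v) - \<phi> x) = 0"
    using adm(3) cont per unfolding holonomic_def by blast
  then have "integral\<^sup>L \<mu> (\<lambda>z. \<phi> (fst z + \<tau> *\<^sub>R snd z) - \<phi> (fst z)) = 0"
    by (simp add: case_prod_beta')
  then show ?thesis using Bochner_Integration.integral_diff[OF i1 i2] by simp
qed

lemma action_lower:
  assumes adm: "admissible H \<tau> \<mu>"
  shows "action H \<tau> \<mu> \<ge> \<tau> * c"
proof -
  have P: "prob_space \<mu>" and sets: "sets \<mu> = sets borel" and hol: "holonomic \<tau> \<mu>"
    and int: "integrable \<mu> (\<lambda>(x, v). Lcal H \<tau> x (x + \<tau> *\<^sub>R v))"
    using adm by (auto simp: admissible_def)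
  have fm: "finite_measure \<mu>" using P prob_space.finite_measure by blast
  have ig: "integrable \<mu> (\<lambda>z. u (fst z + \<tau> *\<^sub>R snd z) - u (fst z) + \<tau> * c)"
    by (rule integrable_bounded_cont[OF fm sets g_cont g_bound])
  have iu1: "integrable \<mu> (\<lambda>z. u (fst z + \<tau> *\<^sub>R snd z))"
    by (rule integrable_bounded_cont[OF fm sets, where B=Ub])
       (auto intro!: continuous_intros continuous_on_compose2[OF ucont] simp: u_bound)
  have iu2: "integrable \<mu> (\<lambda>z. u (fst z))"
    by (rule integrable_bounded_cont[OF fm sets, where B=Ub])
       (auto intro!: continuous_intros continuous_on_compose2[OF ucont] simp: u_bound)
  have "integral\<^sup>L \<mu> (\<lambda>z. u (fst z + \<tau> *\<^sub>R snd z) - u (fst z) + \<tau> * c) = \<tau> * c"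
  proof -
    have "integral\<^sup>L \<mu> (\<lambda>z. u (fst z + \<tau> *\<^sub>R snd z) - u (fst z) + \<tau> * c)
        = integral\<^sup>L \<mu> (\<lambda>z. u (fst z + \<tau> *\<^sub>R snd z) - u (fst z)) + integral\<^sup>L \<mu> (\<lambda>z. \<tau> * c)"
      by (rule Bochner_Integration.integral_add) (auto intro!: Bochner_Integration.integrable_diff iu1 iu2 finite_measure.integrable_const fm)
    also have "\<dots> = \<tau> * c"
      using per_integral[OF P sets hol ucont uper] Bochner_Integration.integral_diff[OF iu1 iu2]
        prob_space.prob_space[OF P] by simp
    finally show ?thesis .
  qed
  moreover have "integral\<^sup>L \<mu> (\<lambda>z. u (fst z + \<tau> *\<^sub>R snd z) - u (fst z) + \<tau> * c)
      \<le> integral\<^sup>L \<mu> (\<lambda>(x, v). Lcal H \<tau> x (x + \<tau> *\<^sub>R v))"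
    by (rule integral_mono[OF ig int]) (use dlo_le' in \<open>auto simp: algebra_simps\<close>)
  ultimately show ?thesis unfolding action_def by simp
qed

lemma action_eq_AE:
  assumes adm: "admissible H \<tau> \<mu>" and act: "action H \<tau> \<mu> = \<tau> * c"
  shows "AE z in \<mu>. z \<in> Zset"
proof -
  have P: "prob_space \<mu>" and sets: "sets \<mu> = sets borel" and hol: "holonomic \<tau> \<mu>"
    and int: "integrable \<mu> (\<lambda>(x, v). Lcal H \<tau> x (x + \<tau> *\<^sub>R v))"
    using adm by (auto simp: admissible_def)
  have fm: "finite_measure \<mu>" using P prob_space.finite_measure by blast
  have iu1: "integrable \<mu> (\<lambda>z. u (fst z + \<tau> *\<^sub>R snd z))"
    by (rule integrable_bounded_cont[OF fm sets, where B=Ub])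
       (auto intro!: continuous_intros continuous_on_compose2[OF ucont] simp: u_bound)
  have iu2: "integrable \<mu> (\<lambda>z. u (fst z))"
    by (rule integrable_bounded_cont[OF fm sets, where B=Ub])
       (auto intro!: continuous_intros continuous_on_compose2[OF ucont] simp: u_bound)
  define f where "f z = (case z of (x, v) \<Rightarrow> Lcal H \<tau> x (x + \<tau> *\<^sub>R v)) - u (fst z + \<tau> *\<^sub>R snd z) + u (fst z) - \<tau> * c" for z
  have intf: "integrable \<mu> f" unfolding f_def
    by (intro Bochner_Integration.integrable_diff Bochner_Integration.integrable_add int iu1 iu2 finite_measure.integrable_const fm)
  have "integral\<^sup>L \<mu> f = integral\<^sup>L \<mu> (\<lambda>(x, v). Lcal H \<tau> x (x + \<tau> *\<^sub>R v)) - integral\<^sup>L \<mu> (\<lambda>z. u (fst z + \<tau> *\<^sub>R snd z)) + integral\<^sup>L \<mu> (\<lambda>z. u (fst z)) - integral\<^sup>L \<mu> (\<lambda>z. \<tau> * c)"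
    unfolding f_def
    by (subst Bochner_Integration.integral_diff Bochner_Integration.integral_add, (intro Bochner_Integration.integrable_diff Bochner_Integration.integrable_add int iu1 iu2 finite_measure.integrable_const fm)+)+
       simp
  also have "\<dots> = 0"
    using act per_integral[OF P sets hol ucont uper] prob_space.prob_space[OF P] unfolding action_def by simp
  finally have "integral\<^sup>L \<mu> f = 0" .
  moreover have "\<And>z. 0 \<le> f z" unfolding f_def using dlo_le' by (auto simp: algebra_simps split: prod.splits)
  ultimately have "AE z in \<mu>. f z = 0" using integral_nonneg_eq_0_iff_AE[OF intf] by simp
  then show ?thesis by eventually_elim (auto simp: f_def Zset_def split: prod.splits)
qed

end


lemma tp_zero: "torus_proj 0 = (\<chi> i. 1)"
  by (simp add: torus_proj_def)

lemma tmul_one: "tmul a (\<chi> i. 1) = a"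
  by (simp add: tmul_def)

lemma proj_meas: "proj \<in> borel_measurable borel"
  by (rule borel_measurable_continuous_onI[OF proj_cont])

context setting begin

definition Fm :: "(complex^'n) \<times> (real^'n) \<Rightarrow> complex^'n" where
  "Fm w = tmul (fst w) (torus_proj (\<tau> *\<^sub>R snd w))"

lemma Fm_proj: "Fm (proj (x, v)) = torus_proj (x + \<tau> *\<^sub>R v)"
  by (simp add: Fm_def proj_def tp_add)

lemma Fm_cont: "continuous_on UNIV Fm"
  unfolding Fm_def tmul_def torus_proj_def by (intro continuous_on_vec_lambda continuous_intros)

definition "good \<mu> \<longleftrightarrow> admissible H \<tau> \<mu> \<and> action H \<tau> \<mu> = \<tau> * c"

lemma good_rho:
  assumes "good \<mu>"
  shows "prob_space (distr \<mu> borel proj)" "sets (distr \<mu> borel proj) = sets borel"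
    and "proj \<in> \<mu> \<rightarrow>\<^sub>M borel"
proof -
  have P: "prob_space \<mu>" and sets: "sets \<mu> = sets borel" using assms by (auto simp: good_def admissible_def)
  show pm: "proj \<in> \<mu> \<rightarrow>\<^sub>M borel" by (rule meas_borelI'[OF proj_meas sets])
  show "prob_space (distr \<mu> borel proj)" by (rule prob_space.prob_space_distr[OF P pm])
  show "sets (distr \<mu> borel proj) = sets borel" by simp
qed

lemma transfer:
  fixes g :: "complex^'n \<Rightarrow> real"
  assumes gd: "good \<mu>" and cont: "continuous_on UNIV g"
  shows "integral\<^sup>L (distr \<mu> borel proj) (\<lambda>w. g (Fm w)) = integral\<^sup>L (distr \<mu> borel proj) (\<lambda>w. g (fst w))"
proof -
  have P: "prob_space \<mu>" and sets: "sets \<mu> = sets borel" and hol: "holonomic \<tau> \<mu>"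
    using gd by (auto simp: good_def admissible_def)
  have pm: "proj \<in> \<mu> \<rightarrow>\<^sub>M borel" using good_rho[OF gd] by simp
  have c1: "continuous_on UNIV (\<lambda>w. g (Fm w))" by (rule continuous_on_compose2[OF cont Fm_cont]) auto
  have c2: "continuous_on UNIV (\<lambda>w::(complex^'n) \<times> (real^'n). g (fst w))"
    by (rule continuous_on_compose2[OF cont]) (auto intro: continuous_intros)
  have cphi: "continuous_on UNIV (\<lambda>x. g (torus_proj x))" by (rule continuous_on_compose2[OF cont tp_cont]) auto
  have pphi: "periodic (\<lambda>x. g (torus_proj x))" by (auto simp: periodic_def tp_int)
  have "integral\<^sup>L (distr \<mu> borel proj) (\<lambda>w. g (Fm w)) = integral\<^sup>L \<mu> (\<lambda>z. g (Fm (proj z)))"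
    by (rule integral_distr[OF pm borel_measurable_continuous_onI[OF c1]])
  also have "\<dots> = integral\<^sup>L \<mu> (\<lambda>z. g (torus_proj (fst z + \<tau> *\<^sub>R snd z)))"
    by (rule Bochner_Integration.integral_cong) (auto simp: Fm_proj[symmetric])
  also have "\<dots> = integral\<^sup>L \<mu> (\<lambda>z. g (torus_proj (fst z)))"
    by (rule per_integral[OF P sets hol cphi pphi])
  also have "\<dots> = integral\<^sup>L \<mu> (\<lambda>z. g (fst (proj z)))" by (simp add: proj_def)
  also have "\<dots> = integral\<^sup>L (distr \<mu> borel proj) (\<lambda>w. g (fst w))"
    by (rule integral_distr[OF pm borel_measurable_continuous_onI[OF c2], symmetric])
  finally show ?thesis .
qed

lemma supp_sub_Zhat:
  assumes gd: "good \<mu>"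
  shows "measure_support (distr \<mu> borel proj) \<subseteq> proj ` Zset"
proof (rule supp_subset_closed)
  show "sets (distr \<mu> borel proj) = sets borel" by simp
  show cl: "closed (proj ` Zset)" by (rule compact_imp_closed[OF Zhat_compact])
  have ae: "AE z in \<mu>. z \<in> Zset" using action_eq_AE gd by (auto simp: good_def)
  show "AE w in distr \<mu> borel proj. w \<in> proj ` Zset"
    by (subst AE_distr_iff[OF good_rho(3)[OF gd]]) (use cl ae in \<open>auto simp: borel_closed elim: AE_mp\<close>)
qed

lemma supp_compact:
  assumes gd: "good \<mu>"
  shows "compact (measure_support (distr \<mu> borel proj))"
proof -
  have "measure_support (distr \<mu> borel proj) = proj ` Zset \<inter> measure_support (distr \<mu> borel proj)"
    using supp_sub_Zhat[OF gd] by blast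
  then show ?thesis using compact_Int_closed[OF Zhat_compact supp_closed] by metis
qed

lemma testfun_cont: "continuous_on UNIV (\<lambda>\<zeta>::complex^'n. min 1 (infdist \<zeta> A))"
  by (intro continuous_intros continuous_on_infdist continuous_on_id)

lemma supp_forward:
  assumes gd: "good \<mu>" and w: "w \<in> measure_support (distr \<mu> borel proj)"
  shows "\<exists>w'\<in>measure_support (distr \<mu> borel proj). fst w' = Fm w"
proof (rule ccontr)
  let ?\<rho> = "distr \<mu> borel proj"
  let ?S = "measure_support ?\<rho>"
  define A where "A = fst ` ?S"
  assume "\<not> (\<exists>w'\<in>?S. fst w' = Fm w)"
  then have nA: "Fm w \<notin> A" unfolding A_def by force
  have "compact A" unfolding A_def
    by (rule compact_continuous_image[OF continuous_on_fst[OF continuous_on_id] supp_compact[OF gd]])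
  then have clA: "closed A" by (rule compact_imp_closed)
  have neA: "A \<noteq> {}" using w unfolding A_def by blast
  define g where "g \<zeta> = min 1 (infdist \<zeta> A)" for \<zeta> :: "complex^'n"
  have gc: "continuous_on UNIV g" unfolding g_def[abs_def] by (rule testfun_cont)
  have "AE w' in ?\<rho>. w' \<in> ?S" by (rule supp_AE) simp
  then have "AE w' in ?\<rho>. g (fst w') = 0" by eventually_elim (auto simp: g_def A_def)
  then have "integral\<^sup>L ?\<rho> (\<lambda>w'. g (fst w')) = 0" by (rule integral_eq_zero_AE)
  then have i0: "integral\<^sup>L ?\<rho> (\<lambda>w'. g (Fm w')) = 0" using transfer[OF gd gc] by simp
  have "g (Fm w) = 0"
  proof (rule supp_zero[OF good_rho(1,2)[OF gd], where h="\<lambda>w'. g (Fm w')" and B=1])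
    show "continuous_on UNIV (\<lambda>w'. g (Fm w'))" by (rule continuous_on_compose2[OF gc Fm_cont]) auto
  qed (use i0 w in \<open>auto simp: g_def infdist_nonneg\<close>)
  then have "infdist (Fm w) A = 0" by (simp add: g_def min_def split: if_splits)
  then show False using nA in_closed_iff_infdist_zero[OF clA neA] by simp
qed

lemma supp_backward:
  assumes gd: "good \<mu>" and w: "w \<in> measure_support (distr \<mu> borel proj)"
  shows "\<exists>w'\<in>measure_support (distr \<mu> borel proj). Fm w' = fst w"
proof (rule ccontr)
  let ?\<rho> = "distr \<mu> borel proj"
  let ?S = "measure_support ?\<rho>"
  define A where "A = Fm ` ?S"
  assume "\<not> (\<exists>w'\<in>?S. Fm w' = fst w)"
  then have nA: "fst w \<notin> A" unfolding A_def by force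
  have "compact A" unfolding A_def
    by (rule compact_continuous_image[OF continuous_on_subset[OF Fm_cont] supp_compact[OF gd]]) simp
  then have clA: "closed A" by (rule compact_imp_closed)
  have neA: "A \<noteq> {}" using w unfolding A_def by blast
  define g where "g \<zeta> = min 1 (infdist \<zeta> A)" for \<zeta> :: "complex^'n"
  have gc: "continuous_on UNIV g" unfolding g_def[abs_def] by (rule testfun_cont)
  have "AE w' in ?\<rho>. w' \<in> ?S" by (rule supp_AE) simp
  then have "AE w' in ?\<rho>. g (Fm w') = 0" by eventually_elim (auto simp: g_def A_def)
  then have "integral\<^sup>L ?\<rho> (\<lambda>w'. g (Fm w')) = 0" by (rule integral_eq_zero_AE)
  then have i0: "integral\<^sup>L ?\<rho> (\<lambda>w'. g (fst w')) = 0" using transfer[OF gd gc] by simp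
  have "g (fst w) = 0"
  proof (rule supp_zero[OF good_rho(1,2)[OF gd], where h="\<lambda>w'. g (fst w')" and B=1])
    show "continuous_on UNIV (\<lambda>w'::(complex^'n) \<times> (real^'n). g (fst w'))"
      by (rule continuous_on_compose2[OF gc]) (auto intro: continuous_intros)
  qed (use i0 w in \<open>auto simp: g_def infdist_nonneg\<close>)
  then have "infdist (fst w) A = 0" by (simp add: g_def min_def split: if_splits)
  then show False using nA in_closed_iff_infdist_zero[OF clA neA] by simp
qed

lemma chain_AL:
  assumes AZ: "A \<subseteq> Zset"
    and pred: "\<And>x v. (x, v) \<in> A \<Longrightarrow> \<exists>x' v'. (x', v') \<in> A \<and> x' + \<tau> *\<^sub>R v' = x"
    and succ: "\<And>x v. (x, v) \<in> A \<Longrightarrow> \<exists>v'. (x + \<tau> *\<^sub>R v, v') \<in> A"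
  shows "A \<subseteq> Aubry_lift H \<tau> c u"
proof
  fix p0 assume p0: "p0 \<in> A"
  obtain x v where xv: "p0 = (x, v)" by (cases p0)
  define nxt where "nxt p = (fst p + \<tau> *\<^sub>R snd p, SOME v'. (fst p + \<tau> *\<^sub>R snd p, v') \<in> A)" for p
  define prv where "prv p = (SOME q. q \<in> A \<and> fst q + \<tau> *\<^sub>R snd q = fst p)" for p :: "(real^'n) \<times> (real^'n)"
  have nxtA: "nxt p \<in> A" if "p \<in> A" for p
  proof -
    obtain a b where p: "p = (a, b)" by (cases p)
    show ?thesis using someI_ex[OF succ[of a b]] that p by (simp add: nxt_def)
  qed
  have nxt1: "fst (nxt p) = fst p + \<tau> *\<^sub>R snd p" for p by (simp add: nxt_def)
  have prvA: "prv p \<in> A \<and> fst (prv p) + \<tau> *\<^sub>R snd (prv p) = fst p" if pA: "p \<in> A" for p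
  proof -
    obtain a b where p: "p = (a, b)" by (cases p)
    obtain x' v' where "(x', v') \<in> A" "x' + \<tau> *\<^sub>R v' = a" using pred[of a b] pA p by blast
    then have "\<exists>q. q \<in> A \<and> fst q + \<tau> *\<^sub>R snd q = fst p" using p by (intro exI[of _ "(x', v')"]) simp
    then show ?thesis unfolding prv_def by (rule someI_ex)
  qed
  define f where "f j = (nxt ^^ j) p0" for j
  define b where "b j = (prv ^^ j) p0" for j
  have fA: "f j \<in> A" for j by (induction j) (auto simp: f_def p0 nxtA)
  have bA: "b j \<in> A" for j by (induction j) (auto simp: b_def p0 prvA)
  have fS: "fst (f (Suc j)) = fst (f j) + \<tau> *\<^sub>R snd (f j)" for j by (simp add: f_def nxt1)
  have bS: "fst (b (Suc j)) + \<tau> *\<^sub>R snd (b (Suc j)) = fst (b j)" for j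
    using prvA[OF bA[of j]] by (simp add: b_def)
  have Zeq: "u (a + \<tau> *\<^sub>R w) + \<tau> * c = u a + Lcal H \<tau> a (a + \<tau> *\<^sub>R w)" if "(a, w) \<in> A" for a w
    using AZ that by (auto simp: Zset_def)
  show "p0 \<in> Aubry_lift H \<tau> c u" unfolding xv AL_char
  proof
    fix n
    define xs where "xs k = (if k \<le> Suc n then fst (f (Suc n - k)) else fst (b (k - Suc n)))" for k
    have "calibrated H \<tau> c u xs" unfolding calibrated_def
    proof
      fix k
      show "u (xs k) + \<tau> * c = u (xs (Suc k)) + Lcal H \<tau> (xs (Suc k)) (xs k)"
      proof (cases "k \<le> n")
        case True
        define m where "m = n - k"
        have e1: "xs k = fst (f (Suc m))" using True by (simp add: xs_def m_def Suc_diff_le)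
        have e2: "xs (Suc k) = fst (f m)" using True by (simp add: xs_def m_def)
        show ?thesis unfolding e1 e2 fS using Zeq[of "fst (f m)" "snd (f m)"] fA[of m] by simp
      next
        case False
        define j where "j = k - Suc n"
        have e1: "xs k = fst (b j)" using False by (simp add: xs_def j_def f_def b_def)
        have kk: "Suc (k - Suc n) = k - n" using False by arith
        have e2: "xs (Suc k) = fst (b (Suc j))" using False by (simp add: xs_def j_def kk)
        show ?thesis unfolding e1 e2 bS[of j, symmetric] using Zeq[of "fst (b (Suc j))" "snd (b (Suc j))"] bA[of "Suc j"] by simp
      qed
    qed
    moreover have "xs (Suc n) = x" by (simp add: xs_def f_def xv)
    moreover have "xs n = x + \<tau> *\<^sub>R v"
    proof -
      have "xs n = fst (f (Suc 0))" by (simp add: xs_def)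
      also have "\<dots> = x + \<tau> *\<^sub>R v" unfolding fS by (simp add: f_def xv)
      finally show ?thesis .
    qed
    ultimately show "\<exists>xs. calibrated H \<tau> c u xs \<and> xs (Suc n) = x \<and> xs n = x + \<tau> *\<^sub>R v" by blast
  qed
qed

lemma supp_sub_Aubry:
  assumes gd: "good \<mu>"
  shows "measure_support (distr \<mu> borel proj) \<subseteq> Aubry_set H \<tau> c u"
proof -
  let ?S = "measure_support (distr \<mu> borel proj)"
  define A where "A = {z. proj z \<in> ?S}"
  have AZ: "A \<subseteq> Zset" using supp_sub_Zhat[OF gd] per_set_proj[OF Z_per_set] unfolding A_def by blast
  have "A \<subseteq> Aubry_lift H \<tau> c u"
  proof (rule chain_AL[OF AZ])
    fix x v assume "(x, v) \<in> A"
    then have w: "proj (x, v) \<in> ?S" by (simp add: A_def)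
    obtain w' where w': "w' \<in> ?S" "Fm w' = fst (proj (x, v))" using supp_backward[OF gd w] by blast
    obtain \<zeta> b where wb: "w' = (\<zeta>, b)" by (cases w')
    have "torus_proj (x + - (\<tau> *\<^sub>R b)) = \<zeta>"
    proof -
      have "torus_proj x = tmul \<zeta> (torus_proj (\<tau> *\<^sub>R b))" using w' wb by (simp add: Fm_def proj_def)
      have "torus_proj (x + - (\<tau> *\<^sub>R b)) = tmul (torus_proj x) (torus_proj (- (\<tau> *\<^sub>R b)))"
        by (rule tp_add)
      also have "\<dots> = tmul \<zeta> (tmul (torus_proj (\<tau> *\<^sub>R b)) (torus_proj (- (\<tau> *\<^sub>R b))))"
        unfolding \<open>torus_proj x = _\<close> by (rule tp_tmul_assoc)
      also have "\<dots> = \<zeta>" unfolding tp_add[symmetric] by (simp only: right_minus tp_zero tmul_one)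
      finally show ?thesis .
    qed
    then have "proj (x + - (\<tau> *\<^sub>R b), b) = w'" using wb by (simp add: proj_def)
    then have "(x + - (\<tau> *\<^sub>R b), b) \<in> A" using w' by (simp add: A_def)
    then show "\<exists>x' v'. (x', v') \<in> A \<and> x' + \<tau> *\<^sub>R v' = x" by force
  next
    fix x v assume "(x, v) \<in> A"
    then have w: "proj (x, v) \<in> ?S" by (simp add: A_def)
    obtain w' where w': "w' \<in> ?S" "fst w' = Fm (proj (x, v))" using supp_forward[OF gd w] by blast
    then have "fst w' = torus_proj (x + \<tau> *\<^sub>R v)" using Fm_proj by simp
    then have "proj (x + \<tau> *\<^sub>R v, snd w') = w'" by (cases w') (simp add: proj_def)
    then show "\<exists>v'. (x + \<tau> *\<^sub>R v, v') \<in> A" using w' by (intro exI[of _ "snd w'"]) (simp add: A_def)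
  qed
  moreover have "?S \<subseteq> proj ` A"
  proof
    fix w assume w: "w \<in> ?S"
    then obtain z where "z \<in> Zset" "w = proj z" using supp_sub_Zhat[OF gd] by blast
    then show "w \<in> proj ` A" using w by (auto simp: A_def)
  qed
  ultimately show ?thesis unfolding Aubry_set_def by blast
qed

end


definition bitr :: "nat \<Rightarrow> real \<Rightarrow> bool" where
  "bitr i a = odd \<lfloor>2 ^ Suc i * a\<rfloor>"

lemma floor_double: "\<lfloor>2 * x\<rfloor> = 2 * \<lfloor>x\<rfloor> + (if odd \<lfloor>2 * x\<rfloor> then 1 else 0)" for x :: real
proof -
  have a: "2 * \<lfloor>x\<rfloor> \<le> \<lfloor>2 * x\<rfloor>" by (simp add: le_floor_iff)
  have "2 * x < 2 * real_of_int \<lfloor>x\<rfloor> + 2" using floor_correct[of x] by linarith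
  then have b: "\<lfloor>2 * x\<rfloor> < 2 * \<lfloor>x\<rfloor> + 2" by (simp add: floor_less_iff)
  show ?thesis using a b by presburger
qed

lemma bits_floor:
  assumes "\<forall>i<N. bitr i a = bitr i b" "\<lfloor>a\<rfloor> = \<lfloor>b\<rfloor>"
  shows "\<lfloor>2 ^ N * a\<rfloor> = \<lfloor>2 ^ N * b\<rfloor>"
  using assms
proof (induction N)
  case 0 then show ?case by simp
next
  case (Suc N)
  have ih: "\<lfloor>2 ^ N * a\<rfloor> = \<lfloor>2 ^ N * b\<rfloor>" using Suc by simp
  have bN: "odd \<lfloor>2 * (2 ^ N * a)\<rfloor> = odd \<lfloor>2 * (2 ^ N * b)\<rfloor>"
    using Suc.prems(1) by (auto simp: bitr_def mult.assoc)
  have "\<lfloor>2 ^ Suc N * a\<rfloor> = \<lfloor>2 * (2 ^ N * a)\<rfloor>" by (simp add: mult.assoc)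
  also have "\<dots> = 2 * \<lfloor>2 ^ N * a\<rfloor> + (if odd \<lfloor>2 * (2 ^ N * a)\<rfloor> then 1 else 0)" by (rule floor_double)
  also have "\<dots> = 2 * \<lfloor>2 ^ N * b\<rfloor> + (if odd \<lfloor>2 * (2 ^ N * b)\<rfloor> then 1 else 0)" using ih bN by simp
  also have "\<dots> = \<lfloor>2 * (2 ^ N * b)\<rfloor>" by (rule floor_double[symmetric])
  also have "\<dots> = \<lfloor>2 ^ Suc N * b\<rfloor>" by (simp add: mult.assoc)
  finally show ?case .
qed

lemma floor_eq_close:
  fixes a b :: real
  assumes "\<lfloor>2 ^ N * a\<rfloor> = \<lfloor>2 ^ N * b\<rfloor>"
  shows "\<bar>a - b\<bar> < 1 / 2 ^ N"
proof -
  have "\<bar>2 ^ N * a - 2 ^ N * b\<bar> < 1"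
    using assms floor_correct[of "2 ^ N * a"] floor_correct[of "2 ^ N * b"] by linarith
  then have "2 ^ N * \<bar>a - b\<bar> < 1" by (simp add: abs_mult right_diff_distrib[symmetric])
  then show ?thesis by (simp add: field_simps)
qed

lemma bits_close:
  assumes "0 \<le> a" "a < 1" "0 \<le> b" "b < 1" "\<forall>i<N. bitr i a = bitr i b"
  shows "\<bar>a - b\<bar> < 1 / 2 ^ N"
proof -
  have "\<lfloor>a\<rfloor> = 0" "\<lfloor>b\<rfloor> = 0" using assms by (simp_all add: floor_eq_iff)
  then show ?thesis using floor_eq_close bits_floor assms(5) by metis
qed

definition tdig :: "bool \<Rightarrow> real" where "tdig b = (if b then 2 else 0)"

definition tern :: "(nat \<Rightarrow> bool) \<Rightarrow> real" where
  "tern \<omega> = (\<Sum>m. tdig (\<omega> m) / 3 ^ Suc m)"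

lemma geo3_sums: "(\<lambda>m. 2 / 3 ^ Suc m :: real) sums 1"
proof -
  have "(\<lambda>m. (2/3) * (1/3::real) ^ m) sums ((2/3) * (1 / (1 - 1/3)))"
    by (intro sums_mult geometric_sums) simp
  then show ?thesis by (simp add: power_one_over field_simps)
qed

lemma tdig_bound: "\<bar>tdig b / 3 ^ Suc m\<bar> \<le> 2 / 3 ^ Suc m"
  by (simp add: tdig_def)

lemma tern_summable: "summable (\<lambda>m. tdig (\<omega> m) / 3 ^ Suc m)"
  by (rule summable_comparison_test'[OF sums_summable[OF geo3_sums], of 0])
     (simp add: tdig_def)

lemma tern_range: "0 \<le> tern \<omega>" "tern \<omega> \<le> 1"
proof -
  show "0 \<le> tern \<omega>" unfolding tern_def by (rule suminf_nonneg[OF tern_summable]) (simp add: tdig_def)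
  have "tern \<omega> \<le> (\<Sum>m. 2 / 3 ^ Suc m :: real)"
    unfolding tern_def by (rule suminf_le[OF _ tern_summable sums_summable[OF geo3_sums]]) (simp add: tdig_def)
  then show "tern \<omega> \<le> 1" using sums_unique[OF geo3_sums] by simp
qed

lemma tail_sums: "(\<lambda>n. 2 / 3 ^ Suc (Suc n + k) :: real) sums (1 / 3 ^ Suc k)"
proof -
  have "(\<lambda>n. (1 / 3 ^ Suc k) * (2 / 3 ^ Suc n) :: real) sums ((1 / 3 ^ Suc k) * 1)"
    by (rule sums_mult[OF geo3_sums])
  moreover have "(\<lambda>n. (1 / 3 ^ Suc k) * (2 / 3 ^ Suc n) :: real) = (\<lambda>n. 2 / 3 ^ Suc (Suc n + k))"
    by (rule ext) (simp add: power_add field_simps)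
  ultimately show ?thesis by simp
qed

lemma tern_sep:
  assumes close: "\<bar>tern \<omega> - tern \<omega>'\<bar> < 1 / 3 ^ Suc M" and mM: "m \<le> M"
  shows "\<omega> m = \<omega>' m"
proof (rule ccontr)
  assume ne: "\<omega> m \<noteq> \<omega>' m"
  define m0 where "m0 = (LEAST m. \<omega> m \<noteq> \<omega>' m)"
  have m0: "\<omega> m0 \<noteq> \<omega>' m0" unfolding m0_def using ne by (rule LeastI)
  have m0m: "m0 \<le> m" unfolding m0_def using ne by (rule Least_le)
  have bef: "\<omega> k = \<omega>' k" if "k < m0" for k using not_less_Least[of k "\<lambda>m. \<omega> m \<noteq> \<omega>' m"] that
    unfolding m0_def by blast
  define d where "d k = tdig (\<omega> k) / 3 ^ Suc k - tdig (\<omega>' k) / 3 ^ Suc k" for k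
  have sd: "summable d" unfolding d_def by (intro summable_diff tern_summable)
  have td: "tern \<omega> - tern \<omega>' = suminf d"
    unfolding tern_def d_def by (rule suminf_diff[OF tern_summable tern_summable])
  have d0: "sum d {..<m0} = 0" by (rule sum.neutral) (auto simp: d_def bef)
  have "suminf d = (\<Sum>n. d (n + m0))" using suminf_split_initial_segment[OF sd, of m0] d0 by simp
  moreover have sdm: "summable (\<lambda>n. d (n + m0))" using sd by (rule summable_ignore_initial_segment)
  ultimately have "suminf d = d m0 + (\<Sum>n. d (Suc n + m0))"
    using suminf_split_head[OF sdm] by simp
  moreover have "\<bar>d m0\<bar> = 2 / 3 ^ Suc m0" using m0 by (auto simp: d_def tdig_def)
  moreover have "\<bar>\<Sum>n. d (Suc n + m0)\<bar> \<le> 1 / 3 ^ Suc m0"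
  proof -
    have "norm (\<Sum>n. d (Suc n + m0)) \<le> (\<Sum>n. 2 / 3 ^ Suc (Suc n + m0))"
      by (rule norm_suminf_le[OF _ sums_summable[OF tail_sums]]) (auto simp: d_def tdig_def)
    then show ?thesis using sums_unique[OF tail_sums] by simp
  qed
  ultimately have "\<bar>tern \<omega> - tern \<omega>'\<bar> \<ge> 1 / 3 ^ Suc m0" using td by linarith
  moreover have "(1::real) / 3 ^ Suc M \<le> 1 / 3 ^ Suc m0"
    using m0m mM by (intro divide_left_mono power_increasing) auto
  ultimately show False using close by linarith
qed


context setting begin

definition "xo = bconf 0"
definition "av k = xo (Suc k)"
definition "vv k = (1 / \<tau>) *\<^sub>R (xo k - xo (Suc k))"
definition "pp k = av k - fl (av k)"
definition "zz k = (pp k, vv k)"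

lemma xo_cal: "calibrated H \<tau> c u xo"
  unfolding xo_def by (rule bconf_calibrated)

lemma av_Z: "(av k, vv k) \<in> Zset"
  unfolding av_def vv_def by (rule calibrated_Z[OF xo_cal])

lemma zz_Z: "zz k \<in> Zset"
  using Z_per[OF av_Z int_vec_uminus[OF int_vec_fl]] by (simp add: zz_def pp_def)

lemma av_tau: "av k + \<tau> *\<^sub>R vv k = xo k"
  using tne by (simp add: av_def vv_def)

lemma pp_tau: "pp k + \<tau> *\<^sub>R vv k = xo k - fl (av k)"
  using av_tau[of k] by (simp add: pp_def algebra_simps)

lemma vv_bound: "norm (vv k) \<le> Rv"
  using Z_bound[OF av_Z] .

lemma Rv_nonneg: "0 \<le> Rv"
  using vv_bound[of 0] norm_ge_zero order_trans by blast

definition coord :: "('n + 'n) \<Rightarrow> (real^'n) \<times> (real^'n) \<Rightarrow> real" where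
  "coord cc z = (case cc of Inl i \<Rightarrow> fst z $ i | Inr i \<Rightarrow> (snd z $ i + Rv) / (2 * Rv + 2))"

lemma coord_range: "0 \<le> coord cc (zz k) \<and> coord cc (zz k) < 1"
proof (cases cc)
  case (Inl i)
  then show ?thesis using frac_lt1[of "av k" i] by (simp add: coord_def zz_def pp_def)
next
  case (Inr i)
  have "\<bar>vv k $ i\<bar> \<le> Rv" using component_le_norm_cart[of "vv k" i] vv_bound[of k] by linarith
  then show ?thesis using Inr Rv_nonneg by (simp add: coord_def zz_def field_simps abs_le_iff)
qed

definition om :: "nat \<Rightarrow> nat \<Rightarrow> bool" where
  "om k m = (\<exists>cc i. m = to_nat (cc, i) \<and> bitr i (coord cc (zz k)))"

lemma om_pos: "om k (to_nat (cc, i)) = bitr i (coord cc (zz k))"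
  unfolding om_def by auto

definition "tt k = tern (om k)"

definition "Kc = real CARD('n) * (2 * Rv + 3)"

lemma Kc_nonneg: "0 \<le> Kc"
  using Rv_nonneg by (simp add: Kc_def)

lemma coord_close:
  assumes "\<And>cc i. i < N \<Longrightarrow> bitr i (coord cc (zz k)) = bitr i (coord cc (zz l))"
  shows "dist (zz k) (zz l) \<le> Kc / 2 ^ N"
proof -
  have cl: "\<bar>coord cc (zz k) - coord cc (zz l)\<bar> < 1 / 2 ^ N" for cc
    using bits_close coord_range assms by blast
  have p: "\<bar>(pp k - pp l) $ i\<bar> \<le> 1 / 2 ^ N" for i
    using cl[of "Inl i"] by (simp add: coord_def zz_def)
  have v: "\<bar>(vv k - vv l) $ i\<bar> \<le> (2 * Rv + 2) / 2 ^ N" for i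
  proof -
    have "\<bar>(vv k $ i + Rv) / (2 * Rv + 2) - (vv l $ i + Rv) / (2 * Rv + 2)\<bar> < 1 / 2 ^ N"
      using cl[of "Inr i"] by (simp add: coord_def zz_def)
    moreover have "(vv k $ i + Rv) / (2 * Rv + 2) - (vv l $ i + Rv) / (2 * Rv + 2) = (vv k $ i - vv l $ i) / (2 * Rv + 2)"
      by (simp add: diff_divide_distrib add_divide_distrib)
    ultimately have "\<bar>vv k $ i - vv l $ i\<bar> / (2 * Rv + 2) < 1 / 2 ^ N" using Rv_nonneg by simp
    then show ?thesis using Rv_nonneg by (simp add: field_simps)
  qed
  have "norm (pp k - pp l) \<le> real CARD('n) * (1 / 2 ^ N)"
    using order_trans[OF norm_le_l1_cart sum_bounded_above[of UNIV "\<lambda>i. \<bar>(pp k - pp l) $ i\<bar>", OF p]] by simp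
  moreover have "norm (vv k - vv l) \<le> real CARD('n) * ((2 * Rv + 2) / 2 ^ N)"
    using order_trans[OF norm_le_l1_cart sum_bounded_above[of UNIV "\<lambda>i. \<bar>(vv k - vv l) $ i\<bar>", OF v]] by simp
  moreover have "dist (zz k) (zz l) \<le> norm (pp k - pp l) + norm (vv k - vv l)"
    using norm_Pair_le[of "pp k - pp l" "vv k - vv l"] by (simp add: zz_def dist_norm)
  ultimately have "dist (zz k) (zz l) \<le> real CARD('n) * (1 / 2 ^ N) + real CARD('n) * ((2 * Rv + 2) / 2 ^ N)"
    by linarith
  also have "\<dots> = real CARD('n) * (2 * Rv + 3) / 2 ^ N" by (simp add: field_simps)
  finally show ?thesis by (simp add: Kc_def)
qed

lemma KP:
  assumes e: "0 < e"
  shows "\<exists>d>0. \<forall>k l. \<bar>tt k - tt l\<bar> < d \<longrightarrow> dist (zz k) (zz l) < e"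
proof -
  obtain N where N: "(1/2::real) ^ N < e / (Kc + 1)"
    using real_arch_pow_inv[of "e / (Kc + 1)" "1/2"] e Kc_nonneg by auto
  have KN: "Kc / 2 ^ N < e"
  proof -
    have "Kc / 2 ^ N \<le> (Kc + 1) * (1/2) ^ N" by (simp add: power_one_over field_simps)
    also have "\<dots> < (Kc + 1) * (e / (Kc + 1))" using N Kc_nonneg by (intro mult_strict_left_mono) auto
    also have "\<dots> = e" using Kc_nonneg by simp
    finally show ?thesis .
  qed
  have "finite ((\<lambda>p. to_nat p) ` ((UNIV :: ('n + 'n) set) \<times> {..<N}) :: nat set)"
    by (intro finite_imageI finite_cartesian_product) auto
  then obtain M0 where M0: "(\<lambda>p. to_nat p) ` ((UNIV :: ('n + 'n) set) \<times> {..<N}) \<subseteq> {..<M0}"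
    using finite_nat_bounded by blast
  show ?thesis
  proof (intro exI[of _ "1 / 3 ^ Suc M0"] conjI allI impI)
    show "(0::real) < 1 / 3 ^ Suc M0" by simp
    fix k l assume cl: "\<bar>tt k - tt l\<bar> < 1 / 3 ^ Suc M0"
    have "bitr i (coord cc (zz k)) = bitr i (coord cc (zz l))" if "i < N" for cc i
    proof -
      have "to_nat (cc, i) < M0" using M0 that by blast
      then have "om k (to_nat (cc, i)) = om l (to_nat (cc, i))"
        using tern_sep[of "om k" "om l" M0] cl by (simp add: tt_def)
      then show ?thesis by (simp add: om_pos)
    qed
    then have "dist (zz k) (zz l) \<le> Kc / 2 ^ N" by (rule coord_close)
    then show "dist (zz k) (zz l) < e" using KN by linarith
  qed
qed

lemma zz_eq: "tt k = tt l \<Longrightarrow> zz k = zz l"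
proof -
  assume eq: "tt k = tt l"
  have "dist (zz k) (zz l) < e" if "0 < e" for e using KP[OF that] eq by force
  then show ?thesis by (metis dist_pos_lt less_irrefl)
qed

lemma tt_range: "0 \<le> tt k" "tt k \<le> 1"
  unfolding tt_def by (rule tern_range)+

lemma exists_G: "\<exists>G :: real \<Rightarrow> (real^'n) \<times> (real^'n). continuous_on UNIV G \<and> (\<forall>k. G (tt k) = zz k)"
proof -
  define T where "T = range tt"
  define g0 where "g0 s = zz (SOME k. tt k = s)" for s
  have g0tt: "g0 (tt k) = zz k" for k
  proof -
    have "tt (SOME k'. tt k' = tt k) = tt k" by (rule someI) (rule refl)
    then show ?thesis unfolding g0_def by (rule zz_eq)
  qed
  have "uniformly_continuous_on T g0"
    unfolding uniformly_continuous_on_def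
  proof (intro allI impI)
    fix e :: real assume "0 < e"
    then obtain d where d: "d > 0" "\<And>k l. \<bar>tt k - tt l\<bar> < d \<Longrightarrow> dist (zz k) (zz l) < e"
      using KP by blast
    show "\<exists>d>0. \<forall>x\<in>T. \<forall>x'\<in>T. dist x' x < d \<longrightarrow> dist (g0 x') (g0 x) < e"
    proof (intro exI[of _ d] conjI ballI impI)
      fix x x' assume "x \<in> T" "x' \<in> T" "dist x' x < d"
      then obtain k l where "x = tt k" "x' = tt l" "\<bar>tt l - tt k\<bar> < d" by (auto simp: T_def dist_real_def)
      then show "dist (g0 x') (g0 x) < e" using d(2) by (simp add: g0tt)
    qed (use d in simp)
  qed
  then obtain g1 where g1: "uniformly_continuous_on (closure T) g1" "\<And>x. x \<in> T \<Longrightarrow> g0 x = g1 x"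
    by (rule uniformly_continuous_on_extension_on_closure) blast
  have "continuous_on (closure T) g1" using g1(1) uniformly_continuous_imp_continuous by blast
  then obtain G where G: "continuous_on UNIV G" "\<And>x. x \<in> closure T \<Longrightarrow> G x = g1 x"
    using Dugundji[of "UNIV :: ((real^'n) \<times> (real^'n)) set" UNIV "closure T" g1]
    by (auto simp: closedin_closed)
  have "G (tt k) = zz k" for k
  proof -
    have "tt k \<in> T" by (simp add: T_def)
    then show ?thesis using G(2) g1(2) closure_subset g0tt by (metis subsetD)
  qed
  then show ?thesis using G(1) by blast
qed

end


lemma isCont_of_on: "continuous_on UNIV f \<Longrightarrow> isCont f x"
  by (metis continuous_on_eq_continuous_at open_UNIV UNIV_I)

context setting begin

lemma g_integral:
  assumes P: "prob_space \<mu>" and sets: "sets \<mu> = sets borel" and hol: "holonomic \<tau> \<mu>"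
  shows "integral\<^sup>L \<mu> (\<lambda>z. u (fst z + \<tau> *\<^sub>R snd z) - u (fst z) + \<tau> * c) = \<tau> * c"
proof -
  have fm: "finite_measure \<mu>" using P prob_space.finite_measure by blast
  have iu1: "integrable \<mu> (\<lambda>z. u (fst z + \<tau> *\<^sub>R snd z))"
    by (rule integrable_bounded_cont[OF fm sets, where B=Ub])
       (auto intro!: continuous_intros continuous_on_compose2[OF ucont] simp: u_bound)
  have iu2: "integrable \<mu> (\<lambda>z. u (fst z))"
    by (rule integrable_bounded_cont[OF fm sets, where B=Ub])
       (auto intro!: continuous_intros continuous_on_compose2[OF ucont] simp: u_bound)
  have "integral\<^sup>L \<mu> (\<lambda>z. u (fst z + \<tau> *\<^sub>R snd z) - u (fst z) + \<tau> * c)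
      = integral\<^sup>L \<mu> (\<lambda>z. u (fst z + \<tau> *\<^sub>R snd z) - u (fst z)) + integral\<^sup>L \<mu> (\<lambda>z. \<tau> * c)"
    by (rule Bochner_Integration.integral_add) (auto intro!: Bochner_Integration.integrable_diff iu1 iu2 finite_measure.integrable_const fm)
  also have "\<dots> = \<tau> * c"
    using per_integral[OF P sets hol ucont uper] Bochner_Integration.integral_diff[OF iu1 iu2]
      prob_space.prob_space[OF P] by simp
  finally show ?thesis .
qed

definition "nuN N = distr (measure_pmf (pmf_of_set {..<Suc N})) borel tt"

lemma tt_meas: "tt \<in> measure_pmf p \<rightarrow>\<^sub>M borel"
  by (simp add: measurable_pmf_measure1)

lemma nuN_rd: "real_distribution (nuN N)"
  unfolding nuN_def real_distribution_def real_distribution_axioms_def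
  by (auto intro: measure_pmf.prob_space_distr tt_meas)

lemma nuN_int:
  assumes fm: "f \<in> borel_measurable borel"
  shows "integral\<^sup>L (nuN N) f = (\<Sum>k<Suc N. f (tt k)) / real (Suc N)"
proof -
  have "integral\<^sup>L (nuN N) f = measure_pmf.expectation (pmf_of_set {..<Suc N}) (\<lambda>k. f (tt k))"
    unfolding nuN_def by (rule integral_distr[OF tt_meas fm])
  also have "\<dots> = (\<Sum>k<Suc N. f (tt k)) / real (card {..<Suc N})" by (rule integral_pmf_of_set) auto
  finally show ?thesis by (simp only: card_lessThan)
qed

lemma nuN_tight: "tight nuN"
  unfolding tight_def
proof (intro conjI allI impI)
  show "real_distribution (nuN n)" for n by (rule nuN_rd)
  fix e :: real assume e: "0 < e"
  have "measure (nuN n) {-1<..1} = 1" for n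
  proof -
    let ?p = "pmf_of_set {..<Suc n}"
    have m1: "measure (nuN n) {-1<..1} = measure (measure_pmf ?p) (tt -` {-1<..1} \<inter> space (measure_pmf ?p))"
      unfolding nuN_def by (rule measure_distr[OF tt_meas]) simp
    have "tt k \<in> {-1<..1}" for k using tt_range[of k] by simp
    then have m2: "tt -` {-1<..1} \<inter> space (measure_pmf ?p) = space (measure_pmf ?p)" by auto
    have m3: "measure (measure_pmf ?p) (space (measure_pmf ?p)) = 1"
      by (rule prob_space.prob_space[OF prob_space_measure_pmf])
    show ?thesis using m1 m2 m3 by simp
  qed
  then show "\<exists>a b. a < b \<and> (\<forall>n. 1 - e < measure (nuN n) {a<..b})"
    using e by (intro exI[of _ "-1"] exI[of _ 1]) auto
qed

lemma exists_good: "\<exists>\<mu>. good \<mu>"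
proof -
  obtain G :: "real \<Rightarrow> (real^'n) \<times> (real^'n)" where Gc: "continuous_on UNIV G" and Gt: "\<And>k. G (tt k) = zz k"
    using exists_G by blast
  obtain r \<nu> where r: "strict_mono r" and rdn: "real_distribution \<nu>" and wc: "weak_conv_m (nuN \<circ> id \<circ> r) \<nu>"
    using tight_imp_convergent_subsubsequence[OF nuN_tight strict_mono_id] by blast
  have Pn: "prob_space \<nu>" and setsn: "sets \<nu> = sets borel" using rdn
    by (auto simp: real_distribution_def real_distribution_axioms_def)
  have lim: "(\<lambda>j. (\<Sum>k<Suc (r j). f (tt k)) / real (Suc (r j))) \<longlonglongrightarrow> integral\<^sup>L \<nu> f"
    if fc: "continuous_on UNIV f" and fb: "\<And>x. \<bar>f x\<bar> \<le> B" for f :: "real \<Rightarrow> real" and B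
  proof -
    have rd: "\<And>n. real_distribution ((nuN \<circ> id \<circ> r) n)" by (simp add: nuN_rd)
    have nb: "\<And>x. norm (f x) \<le> B" using fb by simp
    have "(\<lambda>n. integral\<^sup>L ((nuN \<circ> id \<circ> r) n) f) \<longlonglongrightarrow> integral\<^sup>L \<nu> f"
      by (rule weak_conv_imp_integral_bdd_continuous_conv[where B=B, OF rd rdn wc isCont_of_on[OF fc] nb])
    then show ?thesis using nuN_int[OF borel_measurable_continuous_onI[OF fc]] by simp
  qed
  define \<mu> where "\<mu> = distr \<nu> borel G"
  have Gm: "G \<in> \<nu> \<rightarrow>\<^sub>M borel" by (rule meas_borelI'[OF borel_measurable_continuous_onI[OF Gc] setsn])
  have P: "prob_space \<mu>" unfolding \<mu>_def by (rule prob_space.prob_space_distr[OF Pn Gm])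
  have sets: "sets \<mu> = sets borel" by (simp add: \<mu>_def)
  have cG1: "continuous_on UNIV (\<lambda>s. fst (G s))" by (intro continuous_intros Gc)
  have cG2: "continuous_on UNIV (\<lambda>s. snd (G s))" by (intro continuous_intros Gc)
  have hol: "holonomic \<tau> \<mu>" unfolding holonomic_def
  proof (intro allI impI, elim conjE)
    fix \<phi> :: "real^'n \<Rightarrow> real" assume cont: "continuous_on UNIV \<phi>" and per: "periodic \<phi>"
    obtain B where B: "\<And>x. \<bar>\<phi> x\<bar> \<le> B" using periodic_bounded[OF cont per] by blast
    define f where "f s = \<phi> (fst (G s) + \<tau> *\<^sub>R snd (G s)) - \<phi> (fst (G s))" for s
    have fc: "continuous_on UNIV f" unfolding f_def
      by (intro continuous_intros continuous_on_compose2[OF cont] cG1 cG2) auto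
    have fb: "\<bar>f s\<bar> \<le> 2 * B" for s using B[of "fst (G s) + \<tau> *\<^sub>R snd (G s)"] B[of "fst (G s)"]
      unfolding f_def by (simp add: abs_le_iff)
    have ftt: "f (tt k) = \<phi> (xo k) - \<phi> (xo (Suc k))" for k
    proof -
      have "\<phi> (pp k + \<tau> *\<^sub>R vv k) = \<phi> (xo k)"
        unfolding pp_tau by (rule periodic_shift'[OF per int_vec_fl])
      moreover have "\<phi> (pp k) = \<phi> (xo (Suc k))"
        unfolding pp_def using periodic_shift'[OF per int_vec_fl] by (simp add: av_def)
      ultimately show ?thesis by (simp add: f_def Gt zz_def)
    qed
    have tel: "(\<Sum>k<m. f (tt k)) = \<phi> (xo 0) - \<phi> (xo m)" for m
      by (induction m) (simp_all add: ftt)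
    have "(\<lambda>j. (\<Sum>k<Suc (r j). f (tt k)) / real (Suc (r j))) \<longlonglongrightarrow> 0"
    proof -
      have eq: "(\<Sum>k<Suc (r j). f (tt k)) / real (Suc (r j)) = inverse (real (Suc (r j))) * (\<phi> (xo 0) - \<phi> (xo (Suc (r j))))" for j
        using tel[of "Suc (r j)"] by (simp add: divide_inverse mult.commute)
      have li: "(\<lambda>j. inverse (real (Suc (r j)))) \<longlonglongrightarrow> 0"
        using LIMSEQ_subseq_LIMSEQ[OF LIMSEQ_inverse_real_of_nat r] by (simp add: o_def)
      have "norm (\<phi> (xo 0) - \<phi> (xo (Suc (r j)))) \<le> 2 * B" for j
        using B[of "xo 0"] B[of "xo (Suc (r j))"] by (simp add: abs_le_iff)
      then have "\<forall>\<^sub>F j in sequentially. norm (\<phi> (xo 0) - \<phi> (xo (Suc (r j)))) \<le> 2 * B"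
        by simp
      then show ?thesis unfolding eq by (rule lim_null_mult_right_bounded[OF li])
    qed
    then have "integral\<^sup>L \<nu> f = 0" using lim[OF fc fb] LIMSEQ_unique by blast
    moreover have "integral\<^sup>L \<mu> (\<lambda>(x, v). \<phi> (x + \<tau> *\<^sub>R v) - \<phi> x) = integral\<^sup>L \<nu> f"
    proof -
      have e: "(\<lambda>(x, v). \<phi> (x + \<tau> *\<^sub>R v) - \<phi> x) = (\<lambda>z. \<phi> (fst z + \<tau> *\<^sub>R snd z) - \<phi> (fst z))" by auto
      have m: "(\<lambda>z. \<phi> (fst z + \<tau> *\<^sub>R snd z) - \<phi> (fst z)) \<in> borel_measurable borel"
        by (intro borel_measurable_continuous_onI continuous_intros continuous_on_compose2[OF cont]) auto
      show ?thesis unfolding e \<mu>_def by (subst integral_distr[OF Gm m]) (simp add: f_def[abs_def])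
    qed
    ultimately show "integral\<^sup>L \<mu> (\<lambda>(x, v). \<phi> (x + \<tau> *\<^sub>R v) - \<phi> x) = 0" by simp
  qed
  have aeZ: "AE z in \<mu>. z \<in> Zset"
  proof -
    define h where "h s = min 1 (infdist (G s) Zset)" for s
    have hc: "continuous_on UNIV h" unfolding h_def by (intro continuous_intros continuous_on_infdist Gc)
    have hb: "\<bar>h s\<bar> \<le> 1" for s by (simp add: h_def infdist_nonneg)
    have "(\<lambda>j. (\<Sum>k<Suc (r j). h (tt k)) / real (Suc (r j))) = (\<lambda>j. 0)"
      by (simp add: h_def Gt zz_Z)
    then have "integral\<^sup>L \<nu> h = 0" using lim[OF hc hb] LIMSEQ_unique tendsto_const by metis
    moreover have "integrable \<nu> h"
      by (rule integrable_bounded_cont[OF prob_space.finite_measure[OF Pn] setsn hc hb])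
    ultimately have "AE s in \<nu>. h s = 0"
      using integral_nonneg_eq_0_iff_AE[of \<nu> h] by (simp add: h_def infdist_nonneg)
    then have "AE s in \<nu>. G s \<in> Zset"
    proof (rule AE_mp, intro AE_I2 impI)
      fix s assume "h s = 0"
      then have "infdist (G s) Zset = 0" by (simp add: h_def min_def split: if_splits)
      then show "G s \<in> Zset" using in_closed_iff_infdist_zero[OF Z_closed Z_nonempty] by simp
    qed
    then show ?thesis unfolding \<mu>_def
      by (subst AE_distr_iff[OF Gm]) (auto simp: borel_closed[OF Z_closed])
  qed
  define g where "g z = u (fst z + \<tau> *\<^sub>R snd z) - u (fst z) + \<tau> * c" for z :: "(real^'n) \<times> (real^'n)"
  have ig: "integrable \<mu> g" unfolding g_def[abs_def]
    by (rule integrable_bounded_cont[OF prob_space.finite_measure[OF P] sets g_cont g_bound])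
  have Lm: "(\<lambda>(x, v). Lcal H \<tau> x (x + \<tau> *\<^sub>R v)) \<in> borel_measurable \<mu>" by (rule meas_borelI[OF Lcal_meas sets])
  have gm: "g \<in> borel_measurable \<mu>" unfolding g_def[abs_def]
    by (rule meas_borelI[OF borel_measurable_continuous_onI[OF g_cont] sets])
  have aeq: "AE z in \<mu>. (\<lambda>(x, v). Lcal H \<tau> x (x + \<tau> *\<^sub>R v)) z = g z"
    using aeZ by eventually_elim (auto simp: Zset_def g_def)
  have int: "integrable \<mu> (\<lambda>(x, v). Lcal H \<tau> x (x + \<tau> *\<^sub>R v))"
    using integrable_cong_AE[OF Lm gm aeq] ig by simp
  have "action H \<tau> \<mu> = integral\<^sup>L \<mu> g" unfolding action_def by (rule integral_cong_AE[OF Lm gm aeq])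
  also have "\<dots> = \<tau> * c" unfolding g_def[abs_def] by (rule g_integral[OF P sets hol])
  finally have "action H \<tau> \<mu> = \<tau> * c" .
  then show ?thesis using P sets hol int by (auto simp: good_def admissible_def)
qed

end


context setting begin

lemma mather_good:
  assumes m: "mather_measure H \<tau> \<mu>"
  shows "good \<mu>"
proof -
  obtain \<mu>0 where g0: "good \<mu>0" using exists_good by blast
  have adm: "admissible H \<tau> \<mu>" using m by (simp add: mather_measure_def)
  have "action H \<tau> \<mu> \<le> action H \<tau> \<mu>0" using m g0 unfolding mather_measure_def good_def by blast
  moreover have "action H \<tau> \<mu>0 = \<tau> * c" using g0 by (simp add: good_def)
  moreover have "action H \<tau> \<mu> \<ge> \<tau> * c" by (rule action_lower[OF adm])
  ultimately show ?thesis using adm by (simp add: good_def)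
qed

lemma good_mather: "good \<mu> \<Longrightarrow> mather_measure H \<tau> \<mu>"
  unfolding mather_measure_def good_def using action_lower by auto

lemma main:
  "Aubry_set H \<tau> c u \<noteq> {} \<and> compact (Aubry_set H \<tau> c u) \<and>
   Mather_set H \<tau> \<noteq> {} \<and> compact (Mather_set H \<tau>) \<and>
   Mather_set H \<tau> \<subseteq> Aubry_set H \<tau> c u"
proof -
  define U where "U = \<Union>{measure_support (distr \<mu> borel proj) | \<mu>. mather_measure H \<tau> \<mu>}"
  have MU: "Mather_set H \<tau> = closure U" by (simp add: Mather_set_def U_def)
  have UZ: "U \<subseteq> proj ` Zset" unfolding U_def using supp_sub_Zhat mather_good by blast
  have UA: "U \<subseteq> Aubry_set H \<tau> c u" unfolding U_def using supp_sub_Aubry mather_good by blast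
  have clA: "closed (Aubry_set H \<tau> c u)" by (rule compact_imp_closed[OF Aubry_compact])
  have MA: "Mather_set H \<tau> \<subseteq> Aubry_set H \<tau> c u" unfolding MU by (rule closure_minimal[OF UA clA])
  have MZ: "Mather_set H \<tau> \<subseteq> proj ` Zset"
    unfolding MU by (rule closure_minimal[OF UZ compact_imp_closed[OF Zhat_compact]])
  have cM: "compact (Mather_set H \<tau>)"
  proof -
    have "Mather_set H \<tau> = proj ` Zset \<inter> closure U" using MZ MU by blast
    then show ?thesis using compact_Int_closed[OF Zhat_compact closed_closure[of U]] by simp
  qed
  obtain \<mu>0 where g0: "good \<mu>0" using exists_good by blast
  have "measure_support (distr \<mu>0 borel proj) \<noteq> {}"
    by (rule supp_nonempty[OF good_rho(1,2)[OF g0]])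
  moreover have "measure_support (distr \<mu>0 borel proj) \<subseteq> U"
    unfolding U_def using good_mather[OF g0] by blast
  ultimately have neM: "Mather_set H \<tau> \<noteq> {}" unfolding MU using closure_subset by blast
  then have "Aubry_set H \<tau> c u \<noteq> {}" using MA by blast
  then show ?thesis using Aubry_compact neM cM MA by blast
qed

end

theorem proposition3p6:
  fixes H :: "real^'n \<Rightarrow> real^'n \<Rightarrow> real" and \<tau> c :: real and u :: "real^'n \<Rightarrow> real"
  assumes "tonelli H"
    and "0 < \<tau>" and "\<tau> < 1"
    and "continuous_on UNIV u" and "periodic u"
    and "solves_dLO H \<tau> c u"
  shows "Aubry_set H \<tau> c u \<noteq> {} \<and> compact (Aubry_set H \<tau> c u) \<and>
         Mather_set H \<tau> \<noteq> {} \<and> compact (Mather_set H \<tau>) \<and>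
         Mather_set H \<tau> \<subseteq> Aubry_set H \<tau> c u"
proof -
  have "setting H \<tau> c u" using assms by (simp add: setting_def)
  then interpret setting H \<tau> c u .
  show ?thesis by (rule main)
qed


end
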